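(* Let $\mathcal{G}=(\mathcal{V},\mathcal{E})$ be a finite connected graph with an arbitrary orientation and incidence matrix $\Omega$, and let $q\ge1$. Then $V_q$ is a metric on $\mathcal{P}(\mathcal{V})$: it is nonnegative, satisfies $V_q(\mu,\nu)=0$ iff $\mu=\nu$, is symmetric, and satisfies the triangle inequality.
   Context: For a finite graph whose edges have been given an orientation, each edge $k$ goes from $\lfloor k\rfloor$ to $\lceil k\rceil$. The incidence matrix $\Omega=(\omega_{x,k})$ has $\omega_{x,k}=1$ if $x=\lceil k\rceil$, $\omega_{x,k}=-1$ if $x=\lfloor k\rfloor$, and $0$ otherwise. $\mathcal{P}(\mathcal{V})$ and $\mathcal{P}(\mathcal{E})$ denote probability vectors on $\mathcal{V}$ and on $\mathcal{E}$. A triple $(f,v,g)$ consists of an absolutely continuous $f:[0,1]\to\mathcal{P}(\mathcal{V})$, a measurable $v:[0,1]\to\mathbb{R}^{\mathcal{E}}$ and a measurable $g:[0,1]\to\mathcal{P}(\mathcal{E})$. The discrete transport equation is $\partial_tf(t)_x=\sum_k\omega_{x,k}v(t)_kg(t)_k$ for a.e. $t$ and all $x$. For $q\ge1$, $\mathcal{I}_q(v,g)=\big(\int_0^1\sum_kg(t)_k|v(t)_k|^qdt\big)^{1/q}$. $V_q(\mu,\nu)$ denotes the infimum of $\mathcal{I}_q(v,g)$ over all triples satisfying the transport equation with $f(0)=\mu$ and $f(1)=\nu$. *)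

theory Defs
  imports "HOL-Analysis.Analysis"
begin

text \<open>An oriented finite graph: vertices of finite type 'v, edges of finite type 'e;
  edge k goes from src k (lower end) to tgt k (upper end).\<close>

definition incidence :: "('e \<Rightarrow> 'v) \<Rightarrow> ('e \<Rightarrow> 'v) \<Rightarrow> 'v \<Rightarrow> 'e \<Rightarrow> real" where
  "incidence src tgt x k = (if x = tgt k then 1 else if x = src k then -1 else 0)"

definition adjacent :: "('e \<Rightarrow> 'v) \<Rightarrow> ('e \<Rightarrow> 'v) \<Rightarrow> 'v \<Rightarrow> 'v \<Rightarrow> bool" where
  "adjacent src tgt x y \<longleftrightarrow> (\<exists>k. (src k = x \<and> tgt k = y) \<or> (src k = y \<and> tgt k = x))"

definition graph_connected :: "('e \<Rightarrow> 'v) \<Rightarrow> ('e \<Rightarrow> 'v) \<Rightarrow> bool" where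
  "graph_connected src tgt \<longleftrightarrow> (\<forall>x y. (adjacent src tgt)\<^sup>*\<^sup>* x y)"

definition prob_vecs :: "('a::finite \<Rightarrow> real) set" where
  "prob_vecs = {p. (\<forall>a. 0 \<le> p a) \<and> (\<Sum>a\<in>UNIV. p a) = 1}"

definition abs_cont_on :: "real \<Rightarrow> real \<Rightarrow> (real \<Rightarrow> real) \<Rightarrow> bool" where
  "abs_cont_on a b h \<longleftrightarrow>
    (\<forall>\<epsilon>>0. \<exists>\<delta>>0. \<forall>(n::nat) (s::nat \<Rightarrow> real) (t::nat \<Rightarrow> real).
       (\<forall>i<n. a \<le> s i \<and> s i \<le> t i \<and> t i \<le> b) \<and>
       (\<forall>i j. i < j \<and> j < n \<longrightarrow> t i \<le> s j) \<and>
       (\<Sum>i<n. t i - s i) < \<delta>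
       \<longrightarrow> (\<Sum>i<n. \<bar>h (t i) - h (s i)\<bar>) < \<epsilon>)"

definition transport_triple ::
  "('e \<Rightarrow> 'v) \<Rightarrow> ('e \<Rightarrow> 'v) \<Rightarrow> ('v::finite \<Rightarrow> real) \<Rightarrow> ('v \<Rightarrow> real) \<Rightarrow>
   (real \<Rightarrow> 'v \<Rightarrow> real) \<Rightarrow> (real \<Rightarrow> ('e::finite) \<Rightarrow> real) \<Rightarrow> (real \<Rightarrow> 'e \<Rightarrow> real) \<Rightarrow> bool" where
  "transport_triple src tgt \<mu> \<nu> f v g \<longleftrightarrow>
     (\<forall>t\<in>{0..1}. f t \<in> prob_vecs) \<and>
     (\<forall>x. abs_cont_on 0 1 (\<lambda>t. f t x)) \<and>
     (\<forall>k. (\<lambda>t. v t k) \<in> borel_measurable lborel) \<and>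
     (\<forall>k. (\<lambda>t. g t k) \<in> borel_measurable lborel) \<and>
     (\<forall>t\<in>{0..1}. g t \<in> prob_vecs) \<and>
     (AE t in lborel. t \<in> {0..1} \<longrightarrow>
        (\<forall>x. ((\<lambda>s. f s x) has_real_derivative
                (\<Sum>k\<in>UNIV. incidence src tgt x k * v t k * g t k)) (at t within {0..1}))) \<and>
     f 0 = \<mu> \<and> f 1 = \<nu>"

definition action :: "real \<Rightarrow> (real \<Rightarrow> ('e::finite) \<Rightarrow> real) \<Rightarrow> (real \<Rightarrow> 'e \<Rightarrow> real) \<Rightarrow> ennreal" where
  "action q v g =
    (let J = (\<integral>\<^sup>+ t. ennreal (\<Sum>k\<in>UNIV. g t k * \<bar>v t k\<bar> powr q) * indicator {0..1} t \<partial>lborel)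
     in if J = (\<infinity>::ennreal) then (\<infinity>::ennreal) else ennreal (enn2real J powr (1 / q)))"

definition Vq :: "('e::finite \<Rightarrow> 'v::finite) \<Rightarrow> ('e \<Rightarrow> 'v) \<Rightarrow> real \<Rightarrow> ('v \<Rightarrow> real) \<Rightarrow> ('v \<Rightarrow> real) \<Rightarrow> ennreal" where
  "Vq src tgt q \<mu> \<nu> = (INF (f, v, g) \<in> {(f, v, g). transport_triple src tgt \<mu> \<nu> f v g}. action q v g)"

end

theory Submission
  imports Defs
begin

lemma acD:
  assumes "abs_cont_on a b h" "(\<epsilon>::real) > 0"
  obtains \<delta> where "\<delta> > 0" "\<And>(n::nat) s t. (\<forall>i<n. a \<le> s i \<and> s i \<le> t i \<and> t i \<le> b) \<and>
       (\<forall>i j. i < j \<and> j < n \<longrightarrow> t i \<le> s j) \<and> (\<Sum>i<n. t i - s i) < \<delta>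
       \<Longrightarrow> (\<Sum>i<n. \<bar>h (t i) - h (s i)\<bar>) < \<epsilon>"
proof -
  have "\<exists>\<delta>>0. \<forall>(n::nat) s t. (\<forall>i<n. a \<le> s i \<and> s i \<le> t i \<and> t i \<le> b) \<and>
       (\<forall>i j. i < j \<and> j < n \<longrightarrow> t i \<le> s j) \<and> (\<Sum>i<n. t i - s i) < \<delta>
       \<longrightarrow> (\<Sum>i<n. \<bar>h (t i) - h (s i)\<bar>) < \<epsilon>"
  using assms(1) assms(2) unfolding abs_cont_on_def by (elim allE impE)
  then obtain \<delta> where dH: "\<delta> > 0 \<and> (\<forall>(n::nat) s t. (\<forall>i<n. a \<le> s i \<and> s i \<le> t i \<and> t i \<le> b) \<and>
       (\<forall>i j. i < j \<and> j < n \<longrightarrow> t i \<le> s j) \<and> (\<Sum>i<n. t i - s i) < \<delta>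
       \<longrightarrow> (\<Sum>i<n. \<bar>h (t i) - h (s i)\<bar>) < \<epsilon>)" by (elim exE)
  note d = conjunct1[OF dH] and H = conjunct2[OF dH]
  show ?thesis by (rule that[OF d], rule H[rule_format])
qed

lemma ac_cong:
  assumes "abs_cont_on a b h" "\<And>x. x \<in> {a..b} \<Longrightarrow> h x = h' x"
  shows "abs_cont_on a b h'"
  unfolding abs_cont_on_def
proof (intro allI impI)
  fix \<epsilon> :: real assume "\<epsilon> > 0"
  obtain \<delta> where d: "\<delta> > 0" and H: "\<And>(n::nat) s t. (\<forall>i<n. a \<le> s i \<and> s i \<le> t i \<and> t i \<le> b) \<and>
       (\<forall>i j. i < j \<and> j < n \<longrightarrow> t i \<le> s j) \<and> (\<Sum>i<n. t i - s i) < \<delta>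
       \<Longrightarrow> (\<Sum>i<n. \<bar>h (t i) - h (s i)\<bar>) < \<epsilon>"
    by (rule acD[OF assms(1) \<open>\<epsilon> > 0\<close>]) (rule that)
  show "\<exists>\<delta>>0. \<forall>(n::nat) s t. (\<forall>i<n. a \<le> s i \<and> s i \<le> t i \<and> t i \<le> b) \<and>
       (\<forall>i j. i < j \<and> j < n \<longrightarrow> t i \<le> s j) \<and> (\<Sum>i<n. t i - s i) < \<delta>
       \<longrightarrow> (\<Sum>i<n. \<bar>h' (t i) - h' (s i)\<bar>) < \<epsilon>"
  proof (intro exI[of _ \<delta>] conjI d allI impI)
    fix n :: nat and s t assume A: "(\<forall>i<n. a \<le> s i \<and> s i \<le> t i \<and> t i \<le> b) \<and>
       (\<forall>i j. i < j \<and> j < n \<longrightarrow> t i \<le> s j) \<and> (\<Sum>i<n. t i - s i) < \<delta>"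
    have "(\<Sum>i<n. \<bar>h' (t i) - h' (s i)\<bar>) = (\<Sum>i<n. \<bar>h (t i) - h (s i)\<bar>)"
      using A assms(2) by (intro sum.cong) auto
    with H[OF A] show "(\<Sum>i<n. \<bar>h' (t i) - h' (s i)\<bar>) < \<epsilon>" by simp
  qed
qed

lemma ac_affine:
  assumes "abs_cont_on a b h" "c > 0" "a = c * a' + d" "b = c * b' + d"
  shows "abs_cont_on a' b' (\<lambda>x. h (c * x + d))"
  unfolding abs_cont_on_def
proof (intro allI impI)
  fix \<epsilon> :: real assume "\<epsilon> > 0"
  obtain \<delta> where d: "\<delta> > 0" and H: "\<And>(n::nat) s t. (\<forall>i<n. a \<le> s i \<and> s i \<le> t i \<and> t i \<le> b) \<and>
       (\<forall>i j. i < j \<and> j < n \<longrightarrow> t i \<le> s j) \<and> (\<Sum>i<n. t i - s i) < \<delta>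
       \<Longrightarrow> (\<Sum>i<n. \<bar>h (t i) - h (s i)\<bar>) < \<epsilon>"
    by (rule acD[OF assms(1) \<open>\<epsilon> > 0\<close>]) (rule that)
  show "\<exists>\<delta>>0. \<forall>(n::nat) s t. (\<forall>i<n. a' \<le> s i \<and> s i \<le> t i \<and> t i \<le> b') \<and>
       (\<forall>i j. i < j \<and> j < n \<longrightarrow> t i \<le> s j) \<and> (\<Sum>i<n. t i - s i) < \<delta>
       \<longrightarrow> (\<Sum>i<n. \<bar>h (c * t i + d) - h (c * s i + d)\<bar>) < \<epsilon>"
  proof (intro exI[of _ "\<delta> / c"] conjI allI impI)
    show "\<delta> / c > 0" using d assms(2) by simp
    fix n :: nat and s t assume A: "(\<forall>i<n. a' \<le> s i \<and> s i \<le> t i \<and> t i \<le> b') \<and>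
       (\<forall>i j. i < j \<and> j < n \<longrightarrow> t i \<le> s j) \<and> (\<Sum>i<n. t i - s i) < \<delta> / c"
    have "(\<Sum>i<n. (c * t i + d) - (c * s i + d)) = c * (\<Sum>i<n. t i - s i)"
      by (simp add: sum_distrib_left algebra_simps)
    also have "\<dots> < \<delta>" using A assms(2) by (simp add: field_simps)
    finally have L: "(\<Sum>i<n. (c * t i + d) - (c * s i + d)) < \<delta>" .
    show "(\<Sum>i<n. \<bar>h (c * t i + d) - h (c * s i + d)\<bar>) < \<epsilon>"
      apply (rule H[of n "\<lambda>i. c * s i + d" "\<lambda>i. c * t i + d"])
      using A L assms(2-4) by (auto intro: mult_left_mono add_right_mono)
  qed
qed

lemma ac_reflect:
  assumes "abs_cont_on a b h"
  shows "abs_cont_on (-b) (-a) (\<lambda>x. h (- x))"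
  unfolding abs_cont_on_def
proof (intro allI impI)
  fix \<epsilon> :: real assume "\<epsilon> > 0"
  obtain \<delta> where d: "\<delta> > 0" and H: "\<And>(n::nat) s t. (\<forall>i<n. a \<le> s i \<and> s i \<le> t i \<and> t i \<le> b) \<and>
       (\<forall>i j. i < j \<and> j < n \<longrightarrow> t i \<le> s j) \<and> (\<Sum>i<n. t i - s i) < \<delta>
       \<Longrightarrow> (\<Sum>i<n. \<bar>h (t i) - h (s i)\<bar>) < \<epsilon>"
    by (rule acD[OF assms(1) \<open>\<epsilon> > 0\<close>]) (rule that)
  show "\<exists>\<delta>>0. \<forall>(n::nat) s t. (\<forall>i<n. -b \<le> s i \<and> s i \<le> t i \<and> t i \<le> -a) \<and>
       (\<forall>i j. i < j \<and> j < n \<longrightarrow> t i \<le> s j) \<and> (\<Sum>i<n. t i - s i) < \<delta>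
       \<longrightarrow> (\<Sum>i<n. \<bar>h (- t i) - h (- s i)\<bar>) < \<epsilon>"
  proof (intro exI[of _ \<delta>] conjI d allI impI)
    fix n :: nat and s t assume A: "(\<forall>i<n. -b \<le> s i \<and> s i \<le> t i \<and> t i \<le> -a) \<and>
       (\<forall>i j. i < j \<and> j < n \<longrightarrow> t i \<le> s j) \<and> (\<Sum>i<n. t i - s i) < \<delta>"
    define s' where "s' i = - t (n - Suc i)" for i
    define t' where "t' i = - s (n - Suc i)" for i
    have e1: "(\<Sum>i<n. t' i - s' i) = (\<Sum>i<n. t i - s i)"
      unfolding s'_def t'_def using sum.nat_diff_reindex[of "\<lambda>i. t i - s i" n] by simp
    have e2: "(\<Sum>i<n. \<bar>h (t' i) - h (s' i)\<bar>) = (\<Sum>i<n. \<bar>h (- t i) - h (- s i)\<bar>)"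
      unfolding s'_def t'_def using sum.nat_diff_reindex[of "\<lambda>i. \<bar>h (- t i) - h (- s i)\<bar>" n]
      by (simp add: abs_minus_commute)
    have P1: "\<forall>i<n. a \<le> s' i \<and> s' i \<le> t' i \<and> t' i \<le> b"
    proof (intro allI impI)
      fix i assume "i < n"
      then have "n - Suc i < n" by simp
      then show "a \<le> s' i \<and> s' i \<le> t' i \<and> t' i \<le> b" using A unfolding s'_def t'_def by force
    qed
    have P2: "\<forall>i j. i < j \<and> j < n \<longrightarrow> t' i \<le> s' j"
    proof (intro allI impI)
      fix i j assume "i < j \<and> j < n"
      then have "n - Suc j < n - Suc i" "n - Suc i < n" by auto
      then show "t' i \<le> s' j" using A unfolding s'_def t'_def by force
    qed
    have P3: "(\<Sum>i<n. t' i - s' i) < \<delta>" using e1 A by simp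
    have "(\<Sum>i<n. \<bar>h (t' i) - h (s' i)\<bar>) < \<epsilon>" by (rule H[OF conjI[OF P1 conjI[OF P2 P3]]])
    with e2 show "(\<Sum>i<n. \<bar>h (- t i) - h (- s i)\<bar>) < \<epsilon>" by simp
  qed
qed

lemma ac_join:
  assumes "abs_cont_on a m h" "abs_cont_on m b h" "a \<le> m" "m \<le> b"
  shows "abs_cont_on a b h"
  unfolding abs_cont_on_def
proof (intro allI impI)
  fix \<epsilon> :: real assume "\<epsilon> > 0"
  then have "\<epsilon>/2 > 0" by simp
  obtain \<delta>1 where d1: "\<delta>1 > 0" and H1: "\<And>(n::nat) s t. (\<forall>i<n. a \<le> s i \<and> s i \<le> t i \<and> t i \<le> m) \<and>
       (\<forall>i j. i < j \<and> j < n \<longrightarrow> t i \<le> s j) \<and> (\<Sum>i<n. t i - s i) < \<delta>1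
       \<Longrightarrow> (\<Sum>i<n. \<bar>h (t i) - h (s i)\<bar>) < \<epsilon>/2"
    by (rule acD[OF assms(1) \<open>\<epsilon>/2 > 0\<close>]) (rule that)
  obtain \<delta>2 where d2: "\<delta>2 > 0" and H2: "\<And>(n::nat) s t. (\<forall>i<n. m \<le> s i \<and> s i \<le> t i \<and> t i \<le> b) \<and>
       (\<forall>i j. i < j \<and> j < n \<longrightarrow> t i \<le> s j) \<and> (\<Sum>i<n. t i - s i) < \<delta>2
       \<Longrightarrow> (\<Sum>i<n. \<bar>h (t i) - h (s i)\<bar>) < \<epsilon>/2"
    by (rule acD[OF assms(2) \<open>\<epsilon>/2 > 0\<close>]) (rule that)
  show "\<exists>\<delta>>0. \<forall>(n::nat) s t. (\<forall>i<n. a \<le> s i \<and> s i \<le> t i \<and> t i \<le> b) \<and>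
       (\<forall>i j. i < j \<and> j < n \<longrightarrow> t i \<le> s j) \<and> (\<Sum>i<n. t i - s i) < \<delta>
       \<longrightarrow> (\<Sum>i<n. \<bar>h (t i) - h (s i)\<bar>) < \<epsilon>"
  proof (intro exI[of _ "min \<delta>1 \<delta>2"] conjI allI impI)
    show "min \<delta>1 \<delta>2 > 0" using d1 d2 by simp
    fix n :: nat and s t assume A: "(\<forall>i<n. a \<le> s i \<and> s i \<le> t i \<and> t i \<le> b) \<and>
       (\<forall>i j. i < j \<and> j < n \<longrightarrow> t i \<le> s j) \<and> (\<Sum>i<n. t i - s i) < min \<delta>1 \<delta>2"
    define s1 where "s1 i = min (s i) m" for i
    define t1 where "t1 i = min (t i) m" for i
    define s2 where "s2 i = max (s i) m" for i
    define t2 where "t2 i = max (t i) m" for i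
    have len: "t i - s i = (t1 i - s1 i) + (t2 i - s2 i)" for i
      unfolding s1_def t1_def s2_def t2_def by (simp add: min_def max_def)
    have pos1: "t1 i - s1 i \<ge> 0" and pos2: "t2 i - s2 i \<ge> 0" if "i < n" for i
      using A that unfolding s1_def t1_def s2_def t2_def by (auto simp: min_def max_def)
    have "(\<Sum>i<n. t i - s i) = (\<Sum>i<n. t1 i - s1 i) + (\<Sum>i<n. t2 i - s2 i)"
      by (simp add: len sum.distrib)
    moreover have "(\<Sum>i<n. t1 i - s1 i) \<ge> 0" "(\<Sum>i<n. t2 i - s2 i) \<ge> 0"
      using pos1 pos2 by (auto intro: sum_nonneg)
    ultimately have L1: "(\<Sum>i<n. t1 i - s1 i) < \<delta>1" and L2: "(\<Sum>i<n. t2 i - s2 i) < \<delta>2"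
      using A by auto
    have ord: "t i \<le> s j" if "i < j" "j < n" for i j using A that by blast
    have S1: "(\<Sum>i<n. \<bar>h (t1 i) - h (s1 i)\<bar>) < \<epsilon>/2"
    proof (rule H1[OF conjI[OF _ conjI[OF _ L1]]])
      show "\<forall>i<n. a \<le> s1 i \<and> s1 i \<le> t1 i \<and> t1 i \<le> m"
        using A assms(3) unfolding s1_def t1_def by (auto simp: min_def)
      show "\<forall>i j. i < j \<and> j < n \<longrightarrow> t1 i \<le> s1 j"
        using ord unfolding s1_def t1_def by (smt (verit) min.mono order_refl)
    qed
    have S2: "(\<Sum>i<n. \<bar>h (t2 i) - h (s2 i)\<bar>) < \<epsilon>/2"
    proof (rule H2[OF conjI[OF _ conjI[OF _ L2]]])
      show "\<forall>i<n. m \<le> s2 i \<and> s2 i \<le> t2 i \<and> t2 i \<le> b"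
        using A assms(4) unfolding s2_def t2_def by (auto simp: max_def)
      show "\<forall>i j. i < j \<and> j < n \<longrightarrow> t2 i \<le> s2 j"
        using ord unfolding s2_def t2_def by (smt (verit) max.mono order_refl)
    qed
    have P: "\<bar>h (t i) - h (s i)\<bar> \<le> \<bar>h (t1 i) - h (s1 i)\<bar> + \<bar>h (t2 i) - h (s2 i)\<bar>" if "i < n" for i
    proof -
      have "s i \<le> t i" using A that by auto
      then consider "t i \<le> m" | "m \<le> s i" | "s i < m \<and> m < t i" by linarith
      then show ?thesis
      proof cases
        case 1 then show ?thesis using \<open>s i \<le> t i\<close> unfolding s1_def t1_def s2_def t2_def by (simp add: min_def max_def)
      next
        case 2 then show ?thesis using \<open>s i \<le> t i\<close> unfolding s1_def t1_def s2_def t2_def by (simp add: min_def max_def)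
      next
        case 3 then show ?thesis unfolding s1_def t1_def s2_def t2_def by (simp add: min_def max_def)
      qed
    qed
    have "(\<Sum>i<n. \<bar>h (t i) - h (s i)\<bar>) \<le> (\<Sum>i<n. \<bar>h (t1 i) - h (s1 i)\<bar> + \<bar>h (t2 i) - h (s2 i)\<bar>)"
      by (rule sum_mono) (use P in auto)
    also have "\<dots> < \<epsilon>" using S1 S2 by (simp add: sum.distrib)
    finally show "(\<Sum>i<n. \<bar>h (t i) - h (s i)\<bar>) < \<epsilon>" .
  qed
qed

lemma ac_linear: "abs_cont_on a b (\<lambda>x. \<alpha> + \<beta> * x)"
  unfolding abs_cont_on_def
proof (intro allI impI)
  fix \<epsilon> :: real assume e: "\<epsilon> > 0"
  show "\<exists>\<delta>>0. \<forall>(n::nat) s t. (\<forall>i<n. a \<le> s i \<and> s i \<le> t i \<and> t i \<le> b) \<and>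
       (\<forall>i j. i < j \<and> j < n \<longrightarrow> t i \<le> s j) \<and> (\<Sum>i<n. t i - s i) < \<delta>
       \<longrightarrow> (\<Sum>i<n. \<bar>(\<alpha> + \<beta> * t i) - (\<alpha> + \<beta> * s i)\<bar>) < \<epsilon>"
  proof (intro exI[of _ "\<epsilon> / (\<bar>\<beta>\<bar> + 1)"] conjI allI impI)
    show "\<epsilon> / (\<bar>\<beta>\<bar> + 1) > 0" using e by simp
    fix n :: nat and s t assume A: "(\<forall>i<n. a \<le> s i \<and> s i \<le> t i \<and> t i \<le> b) \<and>
       (\<forall>i j. i < j \<and> j < n \<longrightarrow> t i \<le> s j) \<and> (\<Sum>i<n. t i - s i) < \<epsilon> / (\<bar>\<beta>\<bar> + 1)"
    have "(\<Sum>i<n. \<bar>(\<alpha> + \<beta> * t i) - (\<alpha> + \<beta> * s i)\<bar>) = (\<Sum>i<n. \<bar>\<beta>\<bar> * (t i - s i))"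
      using A by (intro sum.cong) (auto simp: abs_mult simp flip: right_diff_distrib)
    also have "\<dots> = \<bar>\<beta>\<bar> * (\<Sum>i<n. t i - s i)" by (simp add: sum_distrib_left)
    also have "\<dots> \<le> (\<bar>\<beta>\<bar> + 1) * (\<Sum>i<n. t i - s i)"
      using A by (intro mult_right_mono sum_nonneg) auto
    also have "\<dots> < \<epsilon>" using A by (simp add: field_simps)
    finally show "(\<Sum>i<n. \<bar>(\<alpha> + \<beta> * t i) - (\<alpha> + \<beta> * s i)\<bar>) < \<epsilon>" .
  qed
qed

lemma ac_set:
  fixes h :: "real \<Rightarrow> real"
  assumes "abs_cont_on a b h" "(\<epsilon>::real) > 0"
  obtains \<delta> where "\<delta> > 0" "\<And>D. finite D \<Longrightarrow> (\<forall>(u,v)\<in>D. a \<le> u \<and> u \<le> v \<and> v \<le> b) \<Longrightarrow>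
      (\<forall>p\<in>D. \<forall>p'\<in>D. p \<noteq> p' \<longrightarrow> snd p \<le> fst p' \<or> snd p' \<le> fst p) \<Longrightarrow>
      (\<Sum>(u,v)\<in>D. v - u) < \<delta> \<Longrightarrow> (\<Sum>(u,v)\<in>D. \<bar>h v - h u\<bar>) < \<epsilon>"
proof -
  obtain \<delta> where d: "\<delta> > 0" and H: "\<And>(n::nat) s t. (\<forall>i<n. a \<le> s i \<and> s i \<le> t i \<and> t i \<le> b) \<and>
       (\<forall>i j. i < j \<and> j < n \<longrightarrow> t i \<le> s j) \<and> (\<Sum>i<n. t i - s i) < \<delta>
       \<Longrightarrow> (\<Sum>i<n. \<bar>h (t i) - h (s i)\<bar>) < \<epsilon>"
    by (rule acD[OF assms]) (rule that)
  show ?thesis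
  proof (rule that[OF d])
    fix D :: "(real \<times> real) set"
    assume fin: "finite D" and inD: "\<forall>(u,v)\<in>D. a \<le> u \<and> u \<le> v \<and> v \<le> b"
      and no: "\<forall>p\<in>D. \<forall>p'\<in>D. p \<noteq> p' \<longrightarrow> snd p \<le> fst p' \<or> snd p' \<le> fst p"
      and sm: "(\<Sum>(u,v)\<in>D. v - u) < \<delta>"
    obtain ys where ys: "set ys = D" "distinct ys" using finite_distinct_list[OF fin] by blast
    define xs where "xs = sort_key (\<lambda>p. fst p + snd p) ys"
    have setxs: "set xs = D" and dxs: "distinct xs" and sxs: "sorted (map (\<lambda>p. fst p + snd p) xs)"
      using ys unfolding xs_def by auto
    define n where "n = length xs"
    define s where "s i = fst (xs ! i)" for i
    define t where "t i = snd (xs ! i)" for i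
    have sumeq: "(\<Sum>i<n. F (xs ! i)) = (\<Sum>p\<in>D. F p)" for F :: "real \<times> real \<Rightarrow> real"
    proof -
      have "(\<Sum>i<n. F (xs ! i)) = sum_list (map F xs)"
        unfolding n_def by (simp add: sum_list_sum_nth atLeast0LessThan)
      also have "\<dots> = (\<Sum>p\<in>D. F p)" using dxs setxs by (simp add: sum_list_distinct_conv_sum_set)
      finally show ?thesis .
    qed
    have mem: "xs ! i \<in> D" if "i < n" for i using that setxs unfolding n_def by auto
    have P1: "\<forall>i<n. a \<le> s i \<and> s i \<le> t i \<and> t i \<le> b"
      using mem inD unfolding s_def t_def by fastforce
    have P2: "\<forall>i j. i < j \<and> j < n \<longrightarrow> t i \<le> s j"
    proof (intro allI impI)
      fix i j assume ij: "i < j \<and> j < n"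
      then have le: "fst (xs ! i) + snd (xs ! i) \<le> fst (xs ! j) + snd (xs ! j)"
        using sxs unfolding n_def by (auto simp: sorted_iff_nth_mono)
      have ne: "xs ! i \<noteq> xs ! j" using ij dxs unfolding n_def by (auto simp: nth_eq_iff_index_eq)
      have o: "snd (xs!i) \<le> fst (xs!j) \<or> snd (xs!j) \<le> fst (xs!i)"
        using no mem[of i] mem[of j] ne ij by auto
      have r1: "fst (xs!i) \<le> snd (xs!i)" "fst (xs!j) \<le> snd (xs!j)"
        using inD mem[of i] mem[of j] ij by auto
      obtain u1 v1 u2 v2 where e: "xs!i = (u1,v1)" "xs!j = (u2,v2)" by (cases "xs!i", cases "xs!j") auto
      show "t i \<le> s j"
        using le ne o r1 unfolding s_def t_def e by auto
    qed
    have P3: "(\<Sum>i<n. t i - s i) < \<delta>"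
      using sumeq[of "\<lambda>p. snd p - fst p"] sm unfolding s_def t_def by (simp add: case_prod_beta)
    have "(\<Sum>i<n. \<bar>h (t i) - h (s i)\<bar>) < \<epsilon>" by (rule H[OF conjI[OF P1 conjI[OF P2 P3]]])
    then show "(\<Sum>(u,v)\<in>D. \<bar>h v - h u\<bar>) < \<epsilon>"
      using sumeq[of "\<lambda>p. \<bar>h (snd p) - h (fst p)\<bar>"] unfolding s_def t_def by (simp add: case_prod_beta)
  qed
qed


lemma deriv_local:
  fixes h :: "real \<Rightarrow> real"
  assumes "(h has_real_derivative D) (at t within S)" "(\<epsilon>::real) > 0"
  shows "\<exists>r>0. \<forall>y\<in>S. \<bar>y - t\<bar> < r \<longrightarrow> \<bar>h y - h t - D * (y - t)\<bar> \<le> \<epsilon> * \<bar>y - t\<bar>"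
proof -
  have "((\<lambda>y. (h y - h t) / (y - t)) \<longlongrightarrow> D) (at t within S)"
    using assms(1) by (simp add: has_field_derivative_iff)
  then have "eventually (\<lambda>y. dist ((h y - h t) / (y - t)) D < \<epsilon>) (at t within S)"
    using assms(2) by (rule tendstoD)
  then obtain r where r: "r > 0" "\<And>y. y \<in> S \<Longrightarrow> y \<noteq> t \<Longrightarrow> dist y t < r \<Longrightarrow> dist ((h y - h t) / (y - t)) D < \<epsilon>"
    unfolding eventually_at by blast
  show ?thesis
  proof (intro exI[of _ r] conjI r(1) ballI impI)
    fix y assume y: "y \<in> S" "\<bar>y - t\<bar> < r"
    show "\<bar>h y - h t - D * (y - t)\<bar> \<le> \<epsilon> * \<bar>y - t\<bar>"
    proof (cases "y = t")
      case True then show ?thesis by simp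
    next
      case False
      then have "\<bar>(h y - h t) / (y - t) - D\<bar> < \<epsilon>" using r(2)[of y] y by (simp add: dist_real_def)
      moreover have "h y - h t - D * (y - t) = ((h y - h t) / (y - t) - D) * (y - t)"
        using False by (simp add: field_simps)
      ultimately show ?thesis using False by (simp add: abs_mult mult_right_mono)
    qed
  qed
qed

lemma nonoverlap_real:
  fixes u1 v1 u2 v2 :: real
  assumes "u1 < v1" "u2 < v2" "{u1<..<v1} \<inter> {u2<..<v2} = {}"
  shows "v1 \<le> u2 \<or> v2 \<le> u1"
proof (rule ccontr)
  assume "\<not> (v1 \<le> u2 \<or> v2 \<le> u1)"
  then have "(max u1 u2 + min v1 v2) / 2 \<in> {u1<..<v1} \<inter> {u2<..<v2}" using assms(1,2) by auto
  with assms(3) show False by blast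
qed


lemma ftc_bound:
  fixes h h' H :: "real \<Rightarrow> real"
  assumes ac: "abs_cont_on 0 1 h"
  and N: "N \<in> null_sets lborel"
  and der: "\<And>t. t \<in> {0..1} - N \<Longrightarrow> (h has_real_derivative h' t) (at t within {0..1})"
  and bnd: "\<And>t. t \<in> {0..1} - N \<Longrightarrow> \<bar>h' t\<bar> \<le> H t"
  and Hnn: "\<And>t. 0 \<le> H t"
  and Hint: "(H has_integral I) {0..1}"
  shows "\<bar>h 1 - h 0\<bar> \<le> I"
proof (rule field_le_epsilon)
  fix e :: real assume "e > 0"
  define \<epsilon> where "\<epsilon> = e / 4"
  have \<epsilon>: "\<epsilon> > 0" using \<open>e > 0\<close> unfolding \<epsilon>_def by simp
  obtain \<delta> where \<delta>: "\<delta> > 0" and AC: "\<And>D. finite D \<Longrightarrow> (\<forall>(u,v)\<in>D. 0 \<le> u \<and> u \<le> v \<and> v \<le> 1) \<Longrightarrow>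
      (\<forall>p\<in>D. \<forall>p'\<in>D. p \<noteq> p' \<longrightarrow> snd p \<le> fst p' \<or> snd p' \<le> fst p) \<Longrightarrow>
      (\<Sum>(u,v)\<in>D. v - u) < \<delta> \<Longrightarrow> (\<Sum>(u,v)\<in>D. \<bar>h v - h u\<bar>) < \<epsilon>"
    by (rule ac_set[OF ac \<epsilon>]) (rule that)
  have Nb: "N \<in> sets borel" "emeasure lborel N = 0" using N by auto
  have Nl: "N \<in> sets lebesgue" using Nb by auto
  obtain U where U: "open U" "N \<subseteq> U" "(U - N) \<in> lmeasurable" "emeasure lebesgue (U - N) < ennreal \<delta>"
    using sets_lebesgue_outer_open[OF Nl \<delta>] by blast
  have Nlm: "N \<in> lmeasurable" and mN: "measure lebesgue N = 0"
    using Nb by (auto simp: fmeasurable_def measure_def)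
  have Ueq: "U = (U - N) \<union> N" using U(2) by blast
  have Ulm: "U \<in> lmeasurable" using U(3) Nlm by (subst Ueq) (rule fmeasurable.Un)
  have "ennreal (measure lebesgue (U - N)) < ennreal \<delta>"
    using U(4) by (simp only: emeasure_eq_measure2[OF U(3)])
  then have "measure lebesgue (U - N) < \<delta>" by (simp add: ennreal_less_iff)
  moreover have "measure lebesgue U \<le> measure lebesgue (U - N) + measure lebesgue N"
    by (subst Ueq) (rule measure_Un_le, use U(3) Nlm in auto)
  ultimately have mU: "measure lebesgue U < \<delta>" using mN by linarith
  have Hint': "(H has_integral I) (cbox 0 1)" using Hint by (simp add: cbox_interval)
  obtain \<gamma>1 where g1: "gauge \<gamma>1" and G1': "\<forall>\<D>. \<D> tagged_division_of cbox 0 1 \<and> \<gamma>1 fine \<D> \<longrightarrow>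
      norm ((\<Sum>(x,K)\<in>\<D>. measure lborel K *\<^sub>R H x) - I) < \<epsilon>"
    using Hint'[unfolded has_integral, rule_format, OF \<epsilon>] by blast
  have G1: "\<And>\<D>. \<D> tagged_division_of cbox 0 1 \<Longrightarrow> \<gamma>1 fine \<D> \<Longrightarrow>
      norm ((\<Sum>(x,K)\<in>\<D>. measure lborel K *\<^sub>R H x) - I) < \<epsilon>" using G1' by blast
  have "\<forall>t. \<exists>r. t \<in> {0..1} - N \<longrightarrow> r > 0 \<and> (\<forall>y\<in>{0..1}. \<bar>y - t\<bar> < r \<longrightarrow> \<bar>h y - h t - h' t * (y - t)\<bar> \<le> \<epsilon> * \<bar>y - t\<bar>)"
  proof (intro allI)
    fix t show "\<exists>r. t \<in> {0..1} - N \<longrightarrow> r > 0 \<and> (\<forall>y\<in>{0..1}. \<bar>y - t\<bar> < r \<longrightarrow> \<bar>h y - h t - h' t * (y - t)\<bar> \<le> \<epsilon> * \<bar>y - t\<bar>)"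
    proof (cases "t \<in> {0..1} - N")
      case True then show ?thesis using deriv_local[OF der[OF True] \<epsilon>] by auto
    qed auto
  qed
  from choice[OF this] obtain R where R': "\<forall>t. t \<in> {0..1} - N \<longrightarrow> R t > 0 \<and> (\<forall>y\<in>{0..1}. \<bar>y - t\<bar> < R t \<longrightarrow> \<bar>h y - h t - h' t * (y - t)\<bar> \<le> \<epsilon> * \<bar>y - t\<bar>)"
    by blast
  note R = R'[rule_format]
  have "\<forall>t. \<exists>r. t \<in> N \<longrightarrow> r > 0 \<and> ball t r \<subseteq> U"
    using U(1,2) open_contains_ball by blast
  from choice[OF this] obtain R2 where R2': "\<forall>t. t \<in> N \<longrightarrow> R2 t > 0 \<and> ball t (R2 t) \<subseteq> U" by blast
  note R2 = R2'[rule_format]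
  define r where "r t = (if t \<in> N then R2 t else if t \<in> {0..1} then R t else 1)" for t
  have rpos: "\<forall>t. r t > 0" using R R2 unfolding r_def by auto
  have g: "gauge (\<lambda>t. \<gamma>1 t \<inter> ball t (r t))"
    using g1 gauge_ball_dependent[OF rpos] by (rule gauge_Int)
  obtain p where p: "p tagged_division_of cbox 0 1" and pf: "(\<lambda>t. \<gamma>1 t \<inter> ball t (r t)) fine p"
    using fine_division_exists[OF g] by blast
  have pf1: "\<gamma>1 fine p" and pf2: "(\<lambda>t. ball t (r t)) fine p" using pf by (auto simp: fine_Int)
  have p': "p tagged_division_of {0..1}" using p by (simp add: cbox_interval)
  have finp: "finite p" using p by auto
  have Kform: "\<exists>u v. K = {u..v} \<and> u \<le> v \<and> x \<in> K \<and> K \<subseteq> {0..1} \<and> K \<subseteq> ball x (r x)" if xK: "(x,K) \<in> p" for x K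
  proof -
    obtain u v where "K = cbox u v" using tagged_division_ofD(4)[OF p xK] by blast
    moreover have "x \<in> K" using tagged_division_ofD(2)[OF p xK] .
    moreover have "K \<subseteq> {0..1}" using tagged_division_ofD(3)[OF p xK] by (simp add: cbox_interval)
    moreover have "K \<subseteq> ball x (r x)" using pf2 xK unfolding fine_def by blast
    ultimately show ?thesis by (auto simp: cbox_interval)
  qed
  have tel: "(\<Sum>(x,K)\<in>p. h (Sup K) - h (Inf K)) = h 1 - h 0"
    using additive_tagged_division_1[OF _ p', of h] by simp
  define F where "F = (\<lambda>(x::real,K::real set). \<bar>h (Sup K) - h (Inf K)\<bar>)"
  have "\<bar>h 1 - h 0\<bar> \<le> (\<Sum>(x,K)\<in>p. \<bar>h (Sup K) - h (Inf K)\<bar>)"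
    unfolding tel[symmetric] by (rule order_trans[OF sum_abs]) (simp add: case_prod_beta)
  also have "\<dots> = (\<Sum>(x,K)\<in>p. if x \<in> N then F (x,K) else 0) + (\<Sum>(x,K)\<in>p. if x \<in> N then 0 else F (x,K))"
    unfolding F_def by (simp add: sum.distrib[symmetric] case_prod_beta if_distrib) (rule sum.cong, auto)
  also have "\<dots> \<le> \<epsilon> + (I + \<epsilon> + \<epsilon>)"
  proof (rule add_mono)
    have gd: "(if x \<in> N then 0 else F (x,K)) \<le> measure lborel K * H x + \<epsilon> * measure lborel K" if xK: "(x,K) \<in> p" for x K
    proof (cases "x \<in> N")
      case True
      then show ?thesis using Hnn[of x] by (simp add: \<epsilon> less_imp_le)
    next
      case False
      obtain u v where K: "K = {u..v}" "u \<le> v" "x \<in> K" "K \<subseteq> {0..1}" "K \<subseteq> ball x (r x)"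
        using Kform[OF xK] by blast
      have x01: "x \<in> {0..1} - N" using K False by auto
      have rx: "r x = R x" using x01 unfolding r_def by auto
      have u01: "u \<in> {0..1}" "v \<in> {0..1}" using K by auto
      have "u \<in> K" "v \<in> K" using K by auto
      then have "u \<in> ball x (R x)" "v \<in> ball x (R x)" using K(5) unfolding rx by blast+
      then have uv: "\<bar>u - x\<bar> < R x" "\<bar>v - x\<bar> < R x" by (auto simp: dist_real_def)
      have xuv: "u \<le> x" "x \<le> v" using K by auto
      have e1': "\<bar>h v - h x - h' x * (v - x)\<bar> \<le> \<epsilon> * \<bar>v - x\<bar>"
        using R[OF x01] u01(2) uv(2) by blast
      have e2': "\<bar>h u - h x - h' x * (u - x)\<bar> \<le> \<epsilon> * \<bar>u - x\<bar>"
        using R[OF x01] u01(1) uv(1) by blast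
      have e1: "\<bar>h v - h x - h' x * (v - x)\<bar> \<le> \<epsilon> * (v - x)"
        using e1' xuv by simp
      have e2: "\<bar>h u - h x - h' x * (u - x)\<bar> \<le> \<epsilon> * (x - u)"
        using e2' xuv by simp
      have "\<bar>h v - h u\<bar> \<le> \<bar>h' x\<bar> * (v - u) + \<epsilon> * (v - u)"
      proof -
        have "\<bar>h v - h u\<bar> \<le> \<bar>h v - h x - h' x * (v - x)\<bar> + \<bar>h u - h x - h' x * (u - x)\<bar> + \<bar>h' x * (v - u)\<bar>"
          by (smt (verit) right_diff_distrib)
        also have "\<dots> \<le> \<epsilon> * (v - x) + \<epsilon> * (x - u) + \<bar>h' x\<bar> * (v - u)"
          using e1 e2 K by (simp add: abs_mult)
        finally show ?thesis by (simp add: algebra_simps)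
      qed
      also have "\<dots> \<le> H x * (v - u) + \<epsilon> * (v - u)"
        using bnd[OF x01] K by (simp add: mult_right_mono)
      finally show ?thesis using False K by (simp add: F_def content_real mult.commute)
    qed
    have "(\<Sum>(x,K)\<in>p. if x \<in> N then 0 else F (x,K)) \<le> (\<Sum>(x,K)\<in>p. measure lborel K * H x + \<epsilon> * measure lborel K)"
      by (rule sum_mono) (use gd in auto)
    also have "\<dots> = (\<Sum>(x,K)\<in>p. measure lborel K *\<^sub>R H x) + \<epsilon> * (\<Sum>(x,K)\<in>p. measure lborel K)"
      by (simp add: sum.distrib sum_distrib_left case_prod_beta)
    also have "(\<Sum>(x,K)\<in>p. measure lborel K) = 1"
      using additive_content_tagged_division[OF p] by simp
    also have "(\<Sum>(x,K)\<in>p. measure lborel K *\<^sub>R H x) \<le> I + \<epsilon>"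
      using G1[OF p pf1] by (simp add: abs_less_iff)
    finally show "(\<Sum>(x,K)\<in>p. if x \<in> N then 0 else F (x,K)) \<le> I + \<epsilon> + \<epsilon>" by simp
  next
    define B where "B = {xK \<in> p. fst xK \<in> N \<and> Inf (snd xK) < Sup (snd xK)}"
    have finB: "finite B" using finp unfolding B_def by simp
    have Bp: "B \<subseteq> p" unfolding B_def by auto
    have bform: "\<exists>u v. K = {u..v} \<and> u < v \<and> Inf K = u \<and> Sup K = v \<and> K \<subseteq> U" if xKB: "(x,K) \<in> B" for x K
    proof -
      have xK: "(x,K) \<in> p" "x \<in> N" "Inf K < Sup K" using xKB unfolding B_def by auto
      obtain u v where K: "K = {u..v}" "u \<le> v" "x \<in> K" "K \<subseteq> {0..1}" "K \<subseteq> ball x (r x)"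
        using Kform[OF xK(1)] by blast
      have "r x = R2 x" using xK unfolding r_def by simp
      then have "K \<subseteq> U" using K(5) R2[OF xK(2)] by (metis subset_trans)
      then show ?thesis using K xK(3) by auto
    qed
    have sep: "Sup K1 \<le> Inf K2 \<or> Sup K2 \<le> Inf K1" if th: "(x1,K1) \<in> B" "(x2,K2) \<in> B" "(x1,K1) \<noteq> (x2,K2)" for x1 K1 x2 K2
    proof -
      obtain u1 v1 where 1: "K1 = {u1..v1}" "u1 < v1" "Inf K1 = u1" "Sup K1 = v1" using bform[OF th(1)] by blast
      obtain u2 v2 where 2: "K2 = {u2..v2}" "u2 < v2" "Inf K2 = u2" "Sup K2 = v2" using bform[OF th(2)] by blast
      have "interior K1 \<inter> interior K2 = {}"
        using tagged_division_ofD(5)[OF p] th Bp by blast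
      then show ?thesis using nonoverlap_real[OF 1(2) 2(2)] 1 2 by auto
    qed
    have injB: "inj_on (\<lambda>(x,K). (Inf K, Sup K)) B"
    proof (rule inj_onI, clarsimp)
      fix x1 K1 x2 K2 assume a: "(x1,K1) \<in> B" "(x2,K2) \<in> B" "Inf K1 = Inf K2" "Sup K1 = Sup K2"
      show "x1 = x2 \<and> K1 = K2"
      proof (rule ccontr)
        assume "\<not> (x1 = x2 \<and> K1 = K2)"
        then have "Sup K1 \<le> Inf K2 \<or> Sup K2 \<le> Inf K1" using sep[OF a(1,2)] by auto
        moreover have "Inf K1 < Sup K1" using a(1) unfolding B_def by auto
        ultimately show False using a by auto
      qed
    qed
    have injB2: "inj_on snd B"
    proof (rule inj_onI)
      fix xK1 xK2 assume a: "xK1 \<in> B" "xK2 \<in> B" "snd xK1 = snd xK2"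
      then show "xK1 = xK2" using injB unfolding inj_on_def by (metis (no_types, lifting) case_prod_beta)
    qed
    define D where "D = (\<lambda>(x,K). (Inf K, Sup K)) ` B"
    have "(\<Sum>(x,K)\<in>p. if x \<in> N then F (x,K) else 0) = (\<Sum>xK\<in>p. if fst xK \<in> N \<and> Inf (snd xK) < Sup (snd xK) then F xK else 0)"
    proof (rule sum.cong[OF refl])
      fix xK assume "xK \<in> p"
      then obtain u v where "snd xK = {u..v}" "u \<le> v" using Kform[of "fst xK" "snd xK"] by auto
      then show "(case xK of (x, K) \<Rightarrow> if x \<in> N then F (x, K) else 0) = (if fst xK \<in> N \<and> Inf (snd xK) < Sup (snd xK) then F xK else 0)"
        unfolding F_def by (cases xK) auto
    qed
    also have "\<dots> = (\<Sum>xK\<in>B. F xK)"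
      unfolding B_def using sum.inter_filter[OF finp, of F] by simp
    also have "\<dots> = (\<Sum>(u,v)\<in>D. \<bar>h v - h u\<bar>)"
      unfolding D_def F_def using sum.reindex[OF injB, of "\<lambda>(u,v). \<bar>h v - h u\<bar>"] by (simp add: case_prod_beta)
    also have "\<dots> < \<epsilon>"
    proof (rule AC)
      show "finite D" unfolding D_def using finB by simp
      show "\<forall>(u,v)\<in>D. 0 \<le> u \<and> u \<le> v \<and> v \<le> 1"
      proof (clarsimp simp: D_def)
        fix x K assume "(x,K) \<in> B"
        then obtain u v where "K = {u..v}" "u < v" "Inf K = u" "Sup K = v" using bform by blast
        moreover have "K \<subseteq> {0..1}" using Kform[of x K] \<open>(x,K) \<in> B\<close> Bp by blast
        ultimately show "0 \<le> Inf K \<and> Inf K \<le> Sup K \<and> Sup K \<le> 1" by auto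
      qed
      show "\<forall>p\<in>D. \<forall>p'\<in>D. p \<noteq> p' \<longrightarrow> snd p \<le> fst p' \<or> snd p' \<le> fst p"
        unfolding D_def using sep by fastforce
      have "(\<Sum>(u,v)\<in>D. v - u) = (\<Sum>(x,K)\<in>B. Sup K - Inf K)"
        unfolding D_def using sum.reindex[OF injB, of "\<lambda>(u,v). v - u"] by (simp add: case_prod_beta)
      also have "\<dots> = (\<Sum>K\<in>snd ` B. measure lebesgue K)"
      proof -
        have "(\<Sum>K\<in>snd ` B. measure lebesgue K) = (\<Sum>xK\<in>B. measure lebesgue (snd xK))"
          using sum.reindex[OF injB2, of "measure lebesgue"] by simp
        also have "\<dots> = (\<Sum>(x,K)\<in>B. Sup K - Inf K)"
        proof (rule sum.cong[OF refl], clarsimp)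
          fix x K assume "(x,K) \<in> B"
          then obtain u v where "K = {u..v}" "u < v" "Inf K = u" "Sup K = v" using bform by blast
          then show "measure lebesgue K = Sup K - Inf K" by simp
        qed
        finally show ?thesis by simp
      qed
      also have "\<dots> = measure lebesgue (\<Union>(snd ` B))"
      proof (rule measure_negligible_finite_Union[symmetric])
        show "finite (snd ` B)" using finB by simp
        show "S \<in> lmeasurable" if SB: "S \<in> snd ` B" for S
        proof -
          obtain x where "(x,S) \<in> B" using SB by force
          then obtain u v where "S = {u..v}" using bform by blast
          then show ?thesis using lmeasurable_cbox[of u v] by (simp add: cbox_interval)
        qed
        show "pairwise (\<lambda>S T. negligible (S \<inter> T)) (snd ` B)"
        proof (clarsimp simp: pairwise_def)
          fix x1 K1 x2 K2 assume a: "(x1,K1) \<in> B" "(x2,K2) \<in> B" "K1 \<noteq> K2"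
          obtain u1 v1 where 1: "K1 = {u1..v1}" "u1 < v1" "Inf K1 = u1" "Sup K1 = v1" using bform[OF a(1)] by blast
          obtain u2 v2 where 2: "K2 = {u2..v2}" "u2 < v2" "Inf K2 = u2" "Sup K2 = v2" using bform[OF a(2)] by blast
          have "v1 \<le> u2 \<or> v2 \<le> u1" using sep[OF a(1,2)] a(3) 1 2 by auto
          then have "K1 \<inter> K2 \<subseteq> {v1, v2}" using 1 2 by auto
          then show "negligible (K1 \<inter> K2)" by (rule negligible_subset[rotated]) auto
        qed
      qed
      also have "\<dots> \<le> measure lebesgue U"
      proof (rule measure_mono_fmeasurable[OF _ _ Ulm])
        show "\<Union>(snd ` B) \<subseteq> U" using bform by fastforce
        show "\<Union>(snd ` B) \<in> sets lebesgue"
        proof (rule sets.finite_Union)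
          show "finite (snd ` B)" using finB by simp
          show "snd ` B \<subseteq> sets lebesgue"
          proof
            fix S assume SB: "S \<in> snd ` B"
            obtain x where "(x,S) \<in> B" using SB by force
            then obtain u v where "S = {u..v}" using bform by blast
            then show "S \<in> sets lebesgue" by simp
          qed
        qed
      qed
      finally show "(\<Sum>(u,v)\<in>D. v - u) < \<delta>" using mU by linarith
    qed
    finally show "(\<Sum>(x,K)\<in>p. if x \<in> N then F (x,K) else 0) \<le> \<epsilon>" by simp
  qed
  finally have "\<bar>h 1 - h 0\<bar> \<le> \<epsilon> + (I + \<epsilon> + \<epsilon>)" .
  then show "\<bar>h 1 - h 0\<bar> \<le> I + e" using \<open>e > 0\<close> unfolding \<epsilon>_def by linarith
qed


lemma null_affine:
  fixes c d :: real
  assumes N: "N \<in> null_sets lborel" and c: "c \<noteq> 0"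
  shows "(\<lambda>t. d + c * t) -` N \<in> null_sets lborel"
proof -
  have Nb: "N \<in> sets borel" using N by auto
  have meas: "(\<lambda>t. d + c * t) \<in> borel_measurable borel" by measurable
  have Pb: "(\<lambda>t. d + c * t) -` N \<in> sets borel"
    using measurable_sets[OF meas Nb] by simp
  have "emeasure lborel N = (\<integral>\<^sup>+x. indicator N x \<partial>lborel)"
    using Nb by simp
  also have "\<dots> = ennreal \<bar>c\<bar> * (\<integral>\<^sup>+x. indicator N (d + c * x) \<partial>lborel)"
    using Nb c by (intro nn_integral_real_affine) auto
  also have "(\<integral>\<^sup>+x. indicator N (d + c * x) \<partial>lborel) = (\<integral>\<^sup>+x. indicator ((\<lambda>t. d + c * t) -` N) x \<partial>lborel)"
    by (simp add: indicator_def)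
  also have "\<dots> = emeasure lborel ((\<lambda>t. d + c * t) -` N)"
    using Pb by simp
  finally have "ennreal \<bar>c\<bar> * emeasure lborel ((\<lambda>t. d + c * t) -` N) = 0"
    using N by auto
  then have "emeasure lborel ((\<lambda>t. d + c * t) -` N) = 0" using c by simp
  then show ?thesis using Pb by auto
qed

lemma AE_to_null:
  assumes "AE t in lborel. t \<in> S \<longrightarrow> Q t"
  obtains N where "N \<in> null_sets lborel" "\<And>t. t \<in> S - N \<Longrightarrow> Q t"
proof -
  obtain N where N: "{x \<in> space lborel. \<not> (x \<in> S \<longrightarrow> Q x)} \<subseteq> N" "emeasure lborel N = 0" "N \<in> sets lborel"
    using assms by (rule AE_E)
  show ?thesis
  proof (rule that[of N])
    show "N \<in> null_sets lborel" using N by auto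
    fix t assume "t \<in> S - N" then show "Q t" using N(1) by auto
  qed
qed

lemma null_to_AE:
  assumes "N \<in> null_sets lborel" "\<And>t. t \<in> S - N \<Longrightarrow> Q t"
  shows "AE t in lborel. t \<in> S \<longrightarrow> Q t"
  by (rule AE_I'[OF assms(1)]) (use assms(2) in auto)

lemma pow_bound:
  fixes c q y :: real
  assumes c: "c > 0" and q: "q \<ge> 1" and y: "y \<ge> 0"
  shows "y \<le> c + c powr (1 - q) * y powr q"
proof (cases "y \<le> c")
  case True
  then show ?thesis by (smt (verit) c mult_nonneg_nonneg powr_ge_zero)
next
  case False
  then have yc: "y > c" by simp
  have "y powr q = y powr (1 + (q - 1))" by simp
  also have "\<dots> = y * y powr (q - 1)"
    unfolding powr_add using yc c by simp
  also have "\<dots> \<ge> y * c powr (q - 1)"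
    using yc c q by (intro mult_left_mono powr_mono2) auto
  finally have "c powr (1 - q) * y powr q \<ge> c powr (1 - q) * (y * c powr (q - 1))"
    by (simp add: mult_left_mono)
  also have "c powr (1 - q) * (y * c powr (q - 1)) = y * (c powr (1 - q) * c powr (q - 1))"
    by simp
  also have "c powr (1 - q) * c powr (q - 1) = 1"
    using c by (simp add: powr_add[symmetric])
  finally show ?thesis using c by simp
qed

lemma split_bound:
  fixes q J1 J2 a b l :: real
  assumes q: "q \<ge> 1" and J: "J1 \<ge> 0" "J2 \<ge> 0" and ab: "a > 0" "b > 0"
    and J1: "J1 \<le> a powr q" and J2: "J2 \<le> b powr q" and l: "l = a / (a + b)"
  shows "(l powr (1 - q) * J1 + (1 - l) powr (1 - q) * J2) powr (1 / q) \<le> a + b"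
proof -
  have l1: "1 - l = b / (a + b)" using ab l by (auto simp: field_simps)
  have t1: "l powr (1 - q) * J1 \<le> a * (a + b) powr (q - 1)"
  proof -
    have e: "l powr (1 - q) = a powr (1 - q) / (a + b) powr (1 - q)"
      using ab l by (simp add: powr_divide)
    have A: "a powr (1 - q) * a powr q = a" using ab by (simp add: powr_add[symmetric])
    have B: "1 / (a + b) powr (1 - q) = (a + b) powr (q - 1)"
      using ab by (simp add: powr_minus_divide[symmetric])
    have C: "a powr (1 - q) / (a + b) powr (1 - q) * a powr q = (a powr (1 - q) * a powr q) * (1 / (a + b) powr (1 - q))"
      by (simp add: divide_inverse mult_ac)
    have "l powr (1 - q) * J1 \<le> l powr (1 - q) * a powr q" using J1 by (simp add: mult_left_mono)
    also have "\<dots> = a * (a + b) powr (q - 1)" unfolding e C A B ..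
    finally show ?thesis .
  qed
  have t2: "(1 - l) powr (1 - q) * J2 \<le> b * (a + b) powr (q - 1)"
  proof -
    have e: "(1 - l) powr (1 - q) = b powr (1 - q) / (a + b) powr (1 - q)"
      using ab l1 by (simp add: powr_divide)
    have A: "b powr (1 - q) * b powr q = b" using ab by (simp add: powr_add[symmetric])
    have B: "1 / (a + b) powr (1 - q) = (a + b) powr (q - 1)"
      using ab by (simp add: powr_minus_divide[symmetric])
    have C: "b powr (1 - q) / (a + b) powr (1 - q) * b powr q = (b powr (1 - q) * b powr q) * (1 / (a + b) powr (1 - q))"
      by (simp add: divide_inverse mult_ac)
    have "(1 - l) powr (1 - q) * J2 \<le> (1 - l) powr (1 - q) * b powr q" using J2 by (simp add: mult_left_mono)
    also have "\<dots> = b * (a + b) powr (q - 1)" unfolding e C A B ..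
    finally show ?thesis .
  qed
  have "l powr (1 - q) * J1 + (1 - l) powr (1 - q) * J2 \<le> (a + b) * (a + b) powr (q - 1)"
    using t1 t2 by (simp add: distrib_right)
  also have "\<dots> = (a + b) powr q" using ab by (simp add: powr_add[symmetric] powr_mult_base)
  finally have S: "l powr (1 - q) * J1 + (1 - l) powr (1 - q) * J2 \<le> (a + b) powr q" .
  have nn: "0 \<le> l powr (1 - q) * J1 + (1 - l) powr (1 - q) * J2" using J by simp
  have "(l powr (1 - q) * J1 + (1 - l) powr (1 - q) * J2) powr (1 / q) \<le> ((a + b) powr q) powr (1 / q)"
    using S nn q by (intro powr_mono2) auto
  also have "\<dots> = a + b" using ab q by (simp add: powr_powr)
  finally show ?thesis .
qed


lemma Vq_le:
  assumes "transport_triple src tgt \<mu> \<nu> f v g"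
  shows "Vq src tgt q \<mu> \<nu> \<le> action q v g"
  unfolding Vq_def by (rule INF_lower2[of "(f,v,g)"]) (use assms in auto)

lemma action_fin:
  assumes "(\<integral>\<^sup>+ t. ennreal (\<Sum>k\<in>UNIV. g t k * \<bar>v t k\<bar> powr q) * indicator {0..1} t \<partial>lborel) \<noteq> \<infinity>"
  shows "action q v g = ennreal (enn2real (\<integral>\<^sup>+ t. ennreal (\<Sum>k\<in>UNIV. g t k * \<bar>v t k\<bar> powr q) * indicator {0..1} t \<partial>lborel) powr (1 / q))"
  using assms unfolding action_def Let_def by simp

lemma action_inf:
  assumes "action q v g < \<infinity>"
  shows "(\<integral>\<^sup>+ t. ennreal (\<Sum>k\<in>UNIV. g t k * \<bar>v t k\<bar> powr q) * indicator {0..1} t \<partial>lborel) \<noteq> \<infinity>"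
  using assms unfolding action_def Let_def by (auto split: if_splits)

lemma flux_path:
  fixes src tgt :: "'e::finite \<Rightarrow> 'v::finite"
  assumes loopless: "\<forall>k. src k \<noteq> tgt k"
    and "(adjacent src tgt)\<^sup>*\<^sup>* x y"
  shows "\<exists>J. \<forall>z. (\<Sum>k\<in>UNIV. incidence src tgt z k * J k) = (if z = y then 1 else 0) - (if z = x then 1 else 0)"
  using assms(2)
proof (induction rule: rtranclp_induct)
  case base
  show ?case by (intro exI[of _ "\<lambda>k. 0"]) simp
next
  case (step y z)
  obtain J where J: "\<forall>z. (\<Sum>k\<in>UNIV. incidence src tgt z k * J k) = (if z = y then 1 else 0) - (if z = x then 1 else 0)"
    using step.IH by blast
  obtain k0 where k0: "(src k0 = y \<and> tgt k0 = z) \<or> (src k0 = z \<and> tgt k0 = y)"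
    using step.hyps(2) unfolding adjacent_def by blast
  define s :: real where "s = (if src k0 = y \<and> tgt k0 = z then 1 else -1)"
  have inc: "s * incidence src tgt w k0 = (if w = z then 1 else 0) - (if w = y then 1 else 0)" for w
    using k0 loopless unfolding s_def incidence_def by (auto)
  show ?case
  proof (intro exI[of _ "\<lambda>k. J k + (if k = k0 then s else 0)"] allI)
    fix w
    have "(\<Sum>k\<in>UNIV. incidence src tgt w k * (J k + (if k = k0 then s else 0)))
        = (\<Sum>k\<in>UNIV. incidence src tgt w k * J k) + (\<Sum>k\<in>UNIV. (if k = k0 then s * incidence src tgt w k0 else 0))"
    proof -
      have "(\<Sum>k\<in>UNIV. incidence src tgt w k * (J k + (if k = k0 then s else 0)))
          = (\<Sum>k\<in>UNIV. incidence src tgt w k * J k + (if k = k0 then s * incidence src tgt w k0 else 0))"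
        by (intro sum.cong) (auto simp: distrib_left)
      then show ?thesis by (simp add: sum.distrib)
    qed
    also have "(\<Sum>k\<in>UNIV. (if k = k0 then s * incidence src tgt w k0 else 0)) = s * incidence src tgt w k0"
      by simp
    finally show "(\<Sum>k\<in>UNIV. incidence src tgt w k * (J k + (if k = k0 then s else 0))) =
        (if w = z then 1 else 0) - (if w = x then 1 else 0)"
      using J inc by simp
  qed
qed

lemma flux_exists:
  fixes src tgt :: "'e::finite \<Rightarrow> 'v::finite" and w :: "'v \<Rightarrow> real"
  assumes loopless: "\<forall>k. src k \<noteq> tgt k" and conn: "graph_connected src tgt"
    and w: "(\<Sum>z\<in>UNIV. w z) = 0"
  shows "\<exists>J. \<forall>z. (\<Sum>k\<in>UNIV. incidence src tgt z k * J k) = w z"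
proof -
  fix x0 :: 'v
  have "\<forall>y. \<exists>J. \<forall>z. (\<Sum>k\<in>UNIV. incidence src tgt z k * J k) = (if z = y then 1 else 0) - (if z = x0 then 1 else 0)"
    using flux_path[OF loopless] conn unfolding graph_connected_def by blast
  from choice[OF this] obtain JJ where JJ: "\<forall>y z. (\<Sum>k\<in>UNIV. incidence src tgt z k * JJ y k) = (if z = y then 1 else 0) - (if z = x0 then 1 else 0)"
    by blast
  show ?thesis
  proof (intro exI[of _ "\<lambda>k. \<Sum>y\<in>UNIV. w y * JJ y k"] allI)
    fix z
    have "(\<Sum>k\<in>UNIV. incidence src tgt z k * (\<Sum>y\<in>UNIV. w y * JJ y k))
        = (\<Sum>y\<in>UNIV. w y * (\<Sum>k\<in>UNIV. incidence src tgt z k * JJ y k))"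
    proof -
      have "(\<Sum>k\<in>UNIV. incidence src tgt z k * (\<Sum>y\<in>UNIV. w y * JJ y k))
          = (\<Sum>k\<in>UNIV. \<Sum>y\<in>UNIV. w y * (incidence src tgt z k * JJ y k))"
        by (simp add: sum_distrib_left mult_ac)
      also have "\<dots> = (\<Sum>y\<in>UNIV. \<Sum>k\<in>UNIV. w y * (incidence src tgt z k * JJ y k))"
        by (rule sum.swap)
      also have "\<dots> = (\<Sum>y\<in>UNIV. w y * (\<Sum>k\<in>UNIV. incidence src tgt z k * JJ y k))"
        by (simp add: sum_distrib_left)
      finally show ?thesis .
    qed
    also have "\<dots> = (\<Sum>y\<in>UNIV. w y * ((if z = y then 1 else 0) - (if z = x0 then 1 else 0)))"
      using JJ by simp
    also have "\<dots> = (\<Sum>y\<in>UNIV. (if y = z then w y else 0) - (if z = x0 then 1 else 0) * w y)"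
      by (intro sum.cong) auto
    also have "\<dots> = (\<Sum>y\<in>UNIV. (if y = z then w y else 0)) - (if z = x0 then 1 else 0) * (\<Sum>y\<in>UNIV. w y)"
      by (simp only: sum_subtractf sum_distrib_left)
    also have "(\<Sum>y\<in>UNIV. (if y = z then w y else 0)) = w z" by simp
    finally show "(\<Sum>k\<in>UNIV. incidence src tgt z k * (\<Sum>y\<in>UNIV. w y * JJ y k)) = w z"
      using w by simp
  qed
qed

definition unif :: "'e::finite \<Rightarrow> real" where "unif k = 1 / real CARD('e)"

lemma unif_prob: "unif \<in> prob_vecs"
  unfolding prob_vecs_def unif_def by simp

lemma triple_exists:
  fixes src tgt :: "'e::finite \<Rightarrow> 'v::finite"
  assumes loopless: "\<forall>k. src k \<noteq> tgt k" and conn: "graph_connected src tgt"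
    and \<mu>: "\<mu> \<in> prob_vecs" and \<nu>: "\<nu> \<in> prob_vecs"
  shows "\<exists>f v g. transport_triple src tgt \<mu> \<nu> f v g \<and> action q v g < \<infinity>"
proof -
  have "(\<Sum>z\<in>UNIV. \<nu> z - \<mu> z) = 0" using \<mu> \<nu> unfolding prob_vecs_def by (simp add: sum_subtractf)
  then obtain J where J: "\<And>z. (\<Sum>k\<in>UNIV. incidence src tgt z k * J k) = \<nu> z - \<mu> z"
    using flux_exists[OF loopless conn] by blast
  define C where "C = real CARD('e)"
  have C: "C > 0" unfolding C_def by simp
  define f where "f t = (\<lambda>x. \<mu> x + t * (\<nu> x - \<mu> x))" for t :: real
  define v where "v t = (\<lambda>k. C * J k)" for t :: real
  define g where "g t = (unif :: 'e \<Rightarrow> real)" for t :: real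
  have tt: "transport_triple src tgt \<mu> \<nu> f v g"
    unfolding transport_triple_def
  proof (intro conjI ballI allI)
    fix t :: real assume t: "t \<in> {0..1}"
    have "0 \<le> (1 - t) * \<mu> x + t * \<nu> x" for x using t \<mu> \<nu> unfolding prob_vecs_def by simp
    moreover have "(\<Sum>x\<in>UNIV. \<mu> x + t * (\<nu> x - \<mu> x)) = 1"
      using \<mu> \<nu> unfolding prob_vecs_def by (simp add: sum.distrib sum_subtractf sum_distrib_left[symmetric])
    ultimately show "f t \<in> prob_vecs" unfolding prob_vecs_def f_def by (simp add: algebra_simps)
    show "g t \<in> prob_vecs" unfolding g_def by (rule unif_prob)
  next
    fix x
    show "abs_cont_on 0 1 (\<lambda>t. f t x)" unfolding f_def
      by (rule ac_cong[OF ac_linear[of 0 1 "\<mu> x" "\<nu> x - \<mu> x"]]) (simp add: mult.commute)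
  next
    fix k
    show "(\<lambda>t. v t k) \<in> borel_measurable lborel" unfolding v_def by simp
    show "(\<lambda>t. g t k) \<in> borel_measurable lborel" unfolding g_def by simp
  next
    show "AE t in lborel. t \<in> {0..1} \<longrightarrow> (\<forall>x. ((\<lambda>s. f s x) has_real_derivative
                (\<Sum>k\<in>UNIV. incidence src tgt x k * v t k * g t k)) (at t within {0..1}))"
    proof (rule AE_I2, intro impI allI)
      fix t x
      have "(\<Sum>k\<in>UNIV. incidence src tgt x k * v t k * g t k) = (\<Sum>k\<in>UNIV. incidence src tgt x k * J k)"
        unfolding v_def g_def unif_def C_def by (intro sum.cong) auto
      also have "\<dots> = \<nu> x - \<mu> x" by (rule J)
      finally have e: "(\<Sum>k\<in>UNIV. incidence src tgt x k * v t k * g t k) = \<nu> x - \<mu> x" .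
      have "((\<lambda>s. \<mu> x + s * (\<nu> x - \<mu> x)) has_real_derivative (\<nu> x - \<mu> x)) (at t within {0..1})"
        by (auto intro!: derivative_eq_intros)
      then show "((\<lambda>s. f s x) has_real_derivative (\<Sum>k\<in>UNIV. incidence src tgt x k * v t k * g t k)) (at t within {0..1})"
        unfolding e f_def .
    qed
  next
    show "f 0 = \<mu>" "f 1 = \<nu>" unfolding f_def by auto
  qed
  define c0 where "c0 = (\<Sum>k\<in>UNIV. unif k * \<bar>C * J k\<bar> powr q)"
  have "(\<integral>\<^sup>+ t. ennreal (\<Sum>k\<in>UNIV. g t k * \<bar>v t k\<bar> powr q) * indicator {0..1} t \<partial>lborel)
      = (\<integral>\<^sup>+ t. ennreal c0 * indicator {0..1::real} t \<partial>lborel)"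
    by (simp add: g_def v_def c0_def)
  also have "\<dots> = ennreal c0" by (simp add: nn_integral_cmult_indicator)
  finally have "(\<integral>\<^sup>+ t. ennreal (\<Sum>k\<in>UNIV. g t k * \<bar>v t k\<bar> powr q) * indicator {0..1} t \<partial>lborel) \<noteq> \<infinity>"
    by simp
  then have "action q v g < \<infinity>" by (simp add: action_fin)
  with tt show ?thesis by blast
qed

lemma triple_refl:
  fixes src tgt :: "'e::finite \<Rightarrow> 'v::finite"
  assumes \<mu>: "\<mu> \<in> prob_vecs"
  shows "transport_triple src tgt \<mu> \<mu> (\<lambda>t. \<mu>) (\<lambda>t k. 0) (\<lambda>t. unif) \<and> action q (\<lambda>t k. 0) (\<lambda>t. (unif :: 'e \<Rightarrow> real)) = 0"
proof
  show "transport_triple src tgt \<mu> \<mu> (\<lambda>t. \<mu>) (\<lambda>t k. 0) (\<lambda>t. unif)"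
    unfolding transport_triple_def
  proof (intro conjI ballI allI)
    fix x
    show "abs_cont_on 0 1 (\<lambda>t. \<mu> x)"
      by (rule ac_cong[OF ac_linear[of 0 1 "\<mu> x" 0]]) simp
  next
    show "AE t in lborel. t \<in> {0..1} \<longrightarrow> (\<forall>x. ((\<lambda>s. \<mu> x) has_real_derivative
                (\<Sum>k\<in>UNIV. incidence src tgt x k * 0 * unif k)) (at t within {0..1}))"
      by (rule AE_I2) simp
  qed (use \<mu> unif_prob in auto)
  show "action q (\<lambda>t k. 0) (\<lambda>t. (unif :: 'e \<Rightarrow> real)) = 0"
    unfolding action_def Let_def by simp
qed


lemma Phi_meas:
  fixes v g :: "real \<Rightarrow> 'e::finite \<Rightarrow> real"
  assumes "\<forall>k. (\<lambda>t. v t k) \<in> borel_measurable lborel" "\<forall>k. (\<lambda>t. g t k) \<in> borel_measurable lborel"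
  shows "(\<lambda>t. \<Sum>k\<in>UNIV. g t k * \<bar>v t k\<bar> powr q) \<in> borel_measurable borel"
proof -
  have [measurable]: "(\<lambda>t. v t k) \<in> borel_measurable borel" for k using assms by simp
  have [measurable]: "(\<lambda>t. g t k) \<in> borel_measurable borel" for k using assms by simp
  show ?thesis by measurable
qed

lemma Phi_integral:
  fixes v g :: "real \<Rightarrow> 'e::finite \<Rightarrow> real"
  assumes vm: "\<forall>k. (\<lambda>t. v t k) \<in> borel_measurable lborel" and gm: "\<forall>k. (\<lambda>t. g t k) \<in> borel_measurable lborel"
    and gp: "\<forall>t\<in>{0..1}. g t \<in> prob_vecs"
    and fin: "(\<integral>\<^sup>+ t. ennreal (\<Sum>k\<in>UNIV. g t k * \<bar>v t k\<bar> powr q) * indicator {0..1} t \<partial>lborel) \<noteq> \<infinity>"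
  shows "((\<lambda>t. \<Sum>k\<in>UNIV. g t k * \<bar>v t k\<bar> powr q) has_integral
           enn2real (\<integral>\<^sup>+ t. ennreal (\<Sum>k\<in>UNIV. g t k * \<bar>v t k\<bar> powr q) * indicator {0..1} t \<partial>lborel)) {0..1}"
proof -
  define \<Phi> where "\<Phi> t = (\<Sum>k\<in>UNIV. g t k * \<bar>v t k\<bar> powr q)" for t
  define Jn where "Jn = (\<integral>\<^sup>+ t. ennreal (\<Phi> t) * indicator {0..1} t \<partial>lborel)"
  have \<Phi>m: "\<Phi> \<in> borel_measurable borel" unfolding \<Phi>_def using Phi_meas[OF vm gm] .
  have \<Phi>nn: "0 \<le> \<Phi> t" if "t \<in> {0..1}" for t
    using gp that unfolding \<Phi>_def prob_vecs_def by (auto intro!: sum_nonneg)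
  have Jfin: "Jn \<noteq> \<infinity>" using fin unfolding Jn_def \<Phi>_def .
  have "(\<integral>\<^sup>+ t. ennreal (\<Phi> t * indicator {0..1} t) \<partial>lborel) = Jn"
    unfolding Jn_def by (intro nn_integral_cong) (simp split: split_indicator)
  also have "Jn = ennreal (enn2real Jn)" using Jfin by (simp add: less_top)
  finally have eq: "(\<integral>\<^sup>+ t. ennreal (\<Phi> t * indicator {0..1} t) \<partial>lborel) = ennreal (enn2real Jn)" .
  have A: "((\<lambda>t. \<Phi> t * indicator {0..1} t) has_integral enn2real Jn) UNIV"
  proof (rule nn_integral_has_integral[OF _ _ eq])
    show "(\<lambda>t. \<Phi> t * indicator {0..1} t) \<in> borel_measurable borel" using \<Phi>m by measurable
    show "0 \<le> \<Phi> t * indicator {0..1} t" for t using \<Phi>nn by (simp split: split_indicator)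
    show "0 \<le> enn2real Jn" by simp
  qed
  have eq2: "(\<lambda>t. \<Phi> t * indicator {0..1} t) = (\<lambda>t. if t \<in> {0..1} then \<Phi> t else 0)"
    by (auto split: split_indicator)
  from A have "((\<lambda>t. if t \<in> {0..1} then \<Phi> t else 0) has_integral enn2real Jn) UNIV"
    unfolding eq2 .
  then have "(\<Phi> has_integral enn2real Jn) {0..1}"
    by (simp only: has_integral_restrict_UNIV)
  then show ?thesis unfolding \<Phi>_def Jn_def .
qed

lemma zero_imp_eq:
  fixes src tgt :: "'e::finite \<Rightarrow> 'v::finite"
  assumes q: "q \<ge> 1" and \<mu>: "\<mu> \<in> prob_vecs" and \<nu>: "\<nu> \<in> prob_vecs"
    and V0: "Vq src tgt q \<mu> \<nu> = 0"
  shows "\<mu> = \<nu>"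
proof (rule ccontr)
  assume "\<mu> \<noteq> \<nu>"
  then obtain x where x: "\<mu> x \<noteq> \<nu> x" by blast
  define d where "d = \<bar>\<nu> x - \<mu> x\<bar>"
  define c where "c = d / 2"
  have c: "c > 0" using x unfolding c_def d_def by simp
  have "Vq src tgt q \<mu> \<nu> < ennreal c" using V0 c by simp
  then obtain f v g where tt: "transport_triple src tgt \<mu> \<nu> f v g" and act: "action q v g < ennreal c"
    unfolding Vq_def INF_less_iff by auto
  define \<Phi> where "\<Phi> t = (\<Sum>k\<in>UNIV. g t k * \<bar>v t k\<bar> powr q)" for t
  define Jn where "Jn = (\<integral>\<^sup>+ t. ennreal (\<Phi> t) * indicator {0..1} t \<partial>lborel)"
  define J' where "J' = enn2real Jn"
  have ttd: "\<forall>t\<in>{0..1}. f t \<in> prob_vecs" "\<forall>x. abs_cont_on 0 1 (\<lambda>t. f t x)"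
     "\<forall>k. (\<lambda>t. v t k) \<in> borel_measurable lborel" "\<forall>k. (\<lambda>t. g t k) \<in> borel_measurable lborel"
     "\<forall>t\<in>{0..1}. g t \<in> prob_vecs"
     "AE t in lborel. t \<in> {0..1} \<longrightarrow>
        (\<forall>x. ((\<lambda>s. f s x) has_real_derivative
                (\<Sum>k\<in>UNIV. incidence src tgt x k * v t k * g t k)) (at t within {0..1}))"
     "f 0 = \<mu>" "f 1 = \<nu>"
    using tt unfolding transport_triple_def by blast+
  have Jfin: "Jn \<noteq> \<infinity>" unfolding Jn_def \<Phi>_def
    by (rule action_inf) (use order.strict_trans[OF act ennreal_less_top] in simp)
  then have "action q v g = ennreal (J' powr (1 / q))"
    unfolding J'_def Jn_def \<Phi>_def by (rule action_fin)
  with act have "J' powr (1 / q) < c" by (simp add: ennreal_less_iff)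
  then have "(J' powr (1 / q)) powr q < c powr q"
    using q by (intro powr_less_mono2) auto
  moreover have "(J' powr (1 / q)) powr q = J'"
    using q unfolding J'_def by (simp add: powr_powr)
  ultimately have J'c: "J' < c powr q" by simp
  have \<Phi>int: "(\<Phi> has_integral J') {0..1}"
    unfolding \<Phi>_def J'_def Jn_def
    by (rule Phi_integral[OF ttd(3) ttd(4) ttd(5)]) (use Jfin in \<open>simp add: Jn_def \<Phi>_def\<close>)
  define Hf where "Hf t = (c + c powr (1 - q) * \<Phi> t) * indicator {0..1} t" for t
  have "((\<lambda>t. c + c powr (1 - q) * \<Phi> t) has_integral (c + c powr (1 - q) * J')) {0..1}"
  proof -
    have "((\<lambda>t::real. c) has_integral c) {0..1}" using has_integral_const_real[of c 0 1] by simp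
    moreover have "((\<lambda>t. c powr (1 - q) * \<Phi> t) has_integral (c powr (1 - q) * J')) {0..1}"
      using \<Phi>int by (rule has_integral_mult_right)
    ultimately show ?thesis by (rule has_integral_add)
  qed
  then have Hint: "(Hf has_integral (c + c powr (1 - q) * J')) {0..1}"
    by (rule has_integral_cong[THEN iffD1, rotated]) (simp add: Hf_def)
  obtain N where N: "N \<in> null_sets lborel" and der: "\<And>t. t \<in> {0..1} - N \<Longrightarrow>
        (\<forall>x. ((\<lambda>s. f s x) has_real_derivative
                (\<Sum>k\<in>UNIV. incidence src tgt x k * v t k * g t k)) (at t within {0..1}))"
    using ttd(6) by (rule AE_to_null) (rule that)
  have "\<bar>f 1 x - f 0 x\<bar> \<le> c + c powr (1 - q) * J'"
  proof (rule ftc_bound[OF _ N _ _ _ Hint])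
    show "abs_cont_on 0 1 (\<lambda>t. f t x)" using ttd(2) by blast
    show "((\<lambda>s. f s x) has_real_derivative (\<Sum>k\<in>UNIV. incidence src tgt x k * v t k * g t k)) (at t within {0..1})"
      if "t \<in> {0..1} - N" for t using der[OF that] by blast
  next
    fix t assume t: "t \<in> {0..1} - N"
    have gt: "g t \<in> prob_vecs" using ttd(5) t by auto
    have "\<bar>\<Sum>k\<in>UNIV. incidence src tgt x k * v t k * g t k\<bar> \<le> (\<Sum>k\<in>UNIV. \<bar>incidence src tgt x k * v t k * g t k\<bar>)"
      by (rule sum_abs)
    also have "\<dots> \<le> (\<Sum>k\<in>UNIV. g t k * (c + c powr (1 - q) * \<bar>v t k\<bar> powr q))"
    proof (rule sum_mono)
      fix k
      have "\<bar>incidence src tgt x k\<bar> \<le> 1" unfolding incidence_def by auto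
      moreover have "g t k \<ge> 0" using gt unfolding prob_vecs_def by auto
      ultimately have "g t k * (\<bar>v t k\<bar> * \<bar>incidence src tgt x k\<bar>) \<le> g t k * \<bar>v t k\<bar>"
        by (intro mult_left_mono mult_left_le) auto
      then have "\<bar>incidence src tgt x k * v t k * g t k\<bar> \<le> g t k * \<bar>v t k\<bar>"
        using \<open>g t k \<ge> 0\<close> by (simp add: abs_mult mult_ac)
      also have "\<dots> \<le> g t k * (c + c powr (1 - q) * \<bar>v t k\<bar> powr q)"
        using pow_bound[OF c q, of "\<bar>v t k\<bar>"] \<open>g t k \<ge> 0\<close> by (simp add: mult_left_mono)
      finally show "\<bar>incidence src tgt x k * v t k * g t k\<bar> \<le> g t k * (c + c powr (1 - q) * \<bar>v t k\<bar> powr q)" .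
    qed
    also have "\<dots> = c * (\<Sum>k\<in>UNIV. g t k) + c powr (1 - q) * \<Phi> t"
      unfolding \<Phi>_def by (simp add: distrib_left sum.distrib sum_distrib_left sum_distrib_right mult_ac)
    also have "\<dots> = Hf t" using gt t unfolding prob_vecs_def Hf_def by simp
    finally show "\<bar>\<Sum>k\<in>UNIV. incidence src tgt x k * v t k * g t k\<bar> \<le> Hf t" .
  next
    fix t
    show "0 \<le> Hf t"
    proof (cases "t \<in> {0..1}")
      case True
      then have "g t \<in> prob_vecs" using ttd(5) by auto
      then have "0 \<le> \<Phi> t" unfolding \<Phi>_def prob_vecs_def by (auto intro!: sum_nonneg)
      then show ?thesis using True c unfolding Hf_def by simp
    qed (simp add: Hf_def)
  qed
  also have "\<dots> < c + c powr (1 - q) * c powr q"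
    using J'c c by simp
  also have "c powr (1 - q) * c powr q = c" using c by (simp add: powr_add[symmetric])
  finally have "\<bar>f 1 x - f 0 x\<bar> < d" unfolding c_def by simp
  then show False using ttd(7,8) unfolding d_def by simp
qed


lemma triple_reverse:
  fixes src tgt :: "'e::finite \<Rightarrow> 'v::finite"
  assumes tt: "transport_triple src tgt \<mu> \<nu> f v g"
  shows "transport_triple src tgt \<nu> \<mu> (\<lambda>t. f (1 - t)) (\<lambda>t k. - v (1 - t) k) (\<lambda>t. g (1 - t))
         \<and> action q (\<lambda>t k. - v (1 - t) k) (\<lambda>t. g (1 - t)) = action q v g"
proof
  have ttd: "\<forall>t\<in>{0..1}. f t \<in> prob_vecs" "\<forall>x. abs_cont_on 0 1 (\<lambda>t. f t x)"
     "\<forall>k. (\<lambda>t. v t k) \<in> borel_measurable lborel" "\<forall>k. (\<lambda>t. g t k) \<in> borel_measurable lborel"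
     "\<forall>t\<in>{0..1}. g t \<in> prob_vecs"
     "AE t in lborel. t \<in> {0..1} \<longrightarrow>
        (\<forall>x. ((\<lambda>s. f s x) has_real_derivative
                (\<Sum>k\<in>UNIV. incidence src tgt x k * v t k * g t k)) (at t within {0..1}))"
     "f 0 = \<mu>" "f 1 = \<nu>"
    using tt unfolding transport_triple_def by blast+
  have [measurable]: "(\<lambda>t. v t k) \<in> borel_measurable borel" for k using ttd(3) by simp
  have [measurable]: "(\<lambda>t. g t k) \<in> borel_measurable borel" for k using ttd(4) by simp
  show "transport_triple src tgt \<nu> \<mu> (\<lambda>t. f (1 - t)) (\<lambda>t k. - v (1 - t) k) (\<lambda>t. g (1 - t))"
    unfolding transport_triple_def
  proof (intro conjI ballI allI)
    fix t :: real assume "t \<in> {0..1}"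
    then have "1 - t \<in> {0..1}" by auto
    then show "f (1 - t) \<in> prob_vecs" "g (1 - t) \<in> prob_vecs" using ttd(1,5) by auto
  next
    fix x
    have "abs_cont_on (-1) (-0) (\<lambda>s. f (- s) x)" using ac_reflect[OF ttd(2)[rule_format, of x]] .
    then have "abs_cont_on 0 1 (\<lambda>t. f (- (1 * t + -1)) x)"
      by (rule ac_affine[where h="\<lambda>s. f (- s) x"]) auto
    then show "abs_cont_on 0 1 (\<lambda>t. f (1 - t) x)"
      by (rule ac_cong) simp
  next
    fix k
    show "(\<lambda>t. - v (1 - t) k) \<in> borel_measurable lborel" by simp
    show "(\<lambda>t. g (1 - t) k) \<in> borel_measurable lborel" by simp
  next
    obtain N where N: "N \<in> null_sets lborel" and der: "\<And>t. t \<in> {0..1} - N \<Longrightarrow>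
        (\<forall>x. ((\<lambda>s. f s x) has_real_derivative
                (\<Sum>k\<in>UNIV. incidence src tgt x k * v t k * g t k)) (at t within {0..1}))"
      using ttd(6) by (rule AE_to_null) (rule that)
    have N': "(\<lambda>t. 1 + (-1) * t) -` N \<in> null_sets lborel" using null_affine[OF N, of "-1" 1] by simp
    show "AE t in lborel. t \<in> {0..1} \<longrightarrow> (\<forall>x. ((\<lambda>s. f (1 - s) x) has_real_derivative
                (\<Sum>k\<in>UNIV. incidence src tgt x k * - v (1 - t) k * g (1 - t) k)) (at t within {0..1}))"
    proof (rule null_to_AE[OF N'], intro allI)
      fix t x assume t: "t \<in> {0..1} - (\<lambda>t. 1 + (-1) * t) -` N"
      then have t1: "1 - t \<in> {0..1} - N" by auto
      have img: "(\<lambda>t. 1 - t) ` {0..1} = {0..1::real}"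
      proof
        show "(\<lambda>t. 1 - t) ` {0..1} \<subseteq> {0..1::real}" by auto
        show "{0..1::real} \<subseteq> (\<lambda>t. 1 - t) ` {0..1}"
        proof
          fix y :: real assume "y \<in> {0..1}"
          then show "y \<in> (\<lambda>t. 1 - t) ` {0..1}" by (intro image_eqI[of _ _ "1 - y"]) auto
        qed
      qed
      have d1: "((\<lambda>s. f s x) has_real_derivative (\<Sum>k\<in>UNIV. incidence src tgt x k * v (1 - t) k * g (1 - t) k))
                 (at ((\<lambda>t. 1 - t) t) within ((\<lambda>t. 1 - t) ` {0..1}))"
        using der[OF t1] img by simp
      have d2: "((\<lambda>t. 1 - t) has_real_derivative (-1)) (at t within {0..1})"
        by (auto intro!: derivative_eq_intros)
      have "(((\<lambda>s. f s x) \<circ> (\<lambda>t. 1 - t)) has_real_derivative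
             (\<Sum>k\<in>UNIV. incidence src tgt x k * v (1 - t) k * g (1 - t) k) * (-1)) (at t within {0..1})"
        by (rule DERIV_image_chain[OF d1 d2])
      moreover have "(\<Sum>k\<in>UNIV. incidence src tgt x k * v (1 - t) k * g (1 - t) k) * (-1)
          = (\<Sum>k\<in>UNIV. incidence src tgt x k * - v (1 - t) k * g (1 - t) k)"
        by (simp add: sum_negf[symmetric])
      ultimately show "((\<lambda>s. f (1 - s) x) has_real_derivative
                (\<Sum>k\<in>UNIV. incidence src tgt x k * - v (1 - t) k * g (1 - t) k)) (at t within {0..1})"
        by (simp add: o_def)
    qed
  next
    show "f (1 - 0) = \<nu>" "f (1 - 1) = \<mu>" using ttd(7,8) by auto
  qed
  define \<Phi> where "\<Phi> t = (\<Sum>k\<in>UNIV. g t k * \<bar>v t k\<bar> powr q)" for t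
  have \<Phi>m: "\<Phi> \<in> borel_measurable borel" unfolding \<Phi>_def using Phi_meas[OF ttd(3) ttd(4)] .
  have "(\<integral>\<^sup>+ t. ennreal (\<Phi> t) * indicator {0..1} t \<partial>lborel)
      = ennreal \<bar>-1\<bar> * (\<integral>\<^sup>+ t. ennreal (\<Phi> (1 + (-1) * t)) * indicator {0..1} (1 + (-1) * t) \<partial>lborel)"
    by (rule nn_integral_real_affine[where f="\<lambda>t. ennreal (\<Phi> t) * indicator {0..1} t"]) (use \<Phi>m in auto)
  also have "\<dots> = (\<integral>\<^sup>+ t. ennreal (\<Phi> (1 + (-1) * t)) * indicator {0..1} (1 + (-1) * t) \<partial>lborel)"
    by simp
  also have "\<dots> = (\<integral>\<^sup>+ t. ennreal (\<Sum>k\<in>UNIV. g (1 - t) k * \<bar>- v (1 - t) k\<bar> powr q) * indicator {0..1} t \<partial>lborel)"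
    unfolding \<Phi>_def by (intro nn_integral_cong) (simp split: split_indicator)
  finally have "(\<integral>\<^sup>+ t. ennreal (\<Sum>k\<in>UNIV. g (1 - t) k * \<bar>- v (1 - t) k\<bar> powr q) * indicator {0..1} t \<partial>lborel)
      = (\<integral>\<^sup>+ t. ennreal (\<Sum>k\<in>UNIV. g t k * \<bar>v t k\<bar> powr q) * indicator {0..1} t \<partial>lborel)"
    unfolding \<Phi>_def by simp
  then show "action q (\<lambda>t k. - v (1 - t) k) (\<lambda>t. g (1 - t)) = action q v g"
    unfolding action_def by simp
qed

lemma Vq_sym_le:
  fixes src tgt :: "'e::finite \<Rightarrow> 'v::finite"
  shows "Vq src tgt q \<mu> \<nu> \<le> Vq src tgt q \<nu> \<mu>"
  unfolding Vq_def[of src tgt q \<nu> \<mu>]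
proof (rule INF_greatest, clarsimp)
  fix f v g assume tt: "transport_triple src tgt \<nu> \<mu> f v g"
  note r = triple_reverse[OF tt, of q]
  have "Vq src tgt q \<mu> \<nu> \<le> action q (\<lambda>t k. - v (1 - t) k) (\<lambda>t. g (1 - t))"
    by (rule Vq_le) (use r in blast)
  then show "Vq src tgt q \<mu> \<nu> \<le> action q v g" using r by simp
qed


lemma triple_concat:
  fixes src tgt :: "'e::finite \<Rightarrow> 'v::finite"
  assumes tt1: "transport_triple src tgt \<mu> \<nu> f1 v1 g1" and tt2: "transport_triple src tgt \<nu> \<rho> f2 v2 g2"
    and l: "0 < l" "l < 1"
  defines "fc \<equiv> \<lambda>t. if t \<le> l then f1 (t / l) else f2 ((t - l) / (1 - l))"
    and "vc \<equiv> \<lambda>t k. if t \<le> l then v1 (t / l) k / l else v2 ((t - l) / (1 - l)) k / (1 - l)"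
    and "gc \<equiv> \<lambda>t. if t \<le> l then g1 (t / l) else g2 ((t - l) / (1 - l))"
  shows "transport_triple src tgt \<mu> \<rho> fc vc gc"
proof -
  have t1: "\<forall>t\<in>{0..1}. f1 t \<in> prob_vecs" "\<forall>x. abs_cont_on 0 1 (\<lambda>t. f1 t x)"
     "\<forall>k. (\<lambda>t. v1 t k) \<in> borel_measurable lborel" "\<forall>k. (\<lambda>t. g1 t k) \<in> borel_measurable lborel"
     "\<forall>t\<in>{0..1}. g1 t \<in> prob_vecs"
     "AE t in lborel. t \<in> {0..1} \<longrightarrow>
        (\<forall>x. ((\<lambda>s. f1 s x) has_real_derivative
                (\<Sum>k\<in>UNIV. incidence src tgt x k * v1 t k * g1 t k)) (at t within {0..1}))"
     "f1 0 = \<mu>" "f1 1 = \<nu>"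
    using tt1 unfolding transport_triple_def by blast+
  have t2: "\<forall>t\<in>{0..1}. f2 t \<in> prob_vecs" "\<forall>x. abs_cont_on 0 1 (\<lambda>t. f2 t x)"
     "\<forall>k. (\<lambda>t. v2 t k) \<in> borel_measurable lborel" "\<forall>k. (\<lambda>t. g2 t k) \<in> borel_measurable lborel"
     "\<forall>t\<in>{0..1}. g2 t \<in> prob_vecs"
     "AE t in lborel. t \<in> {0..1} \<longrightarrow>
        (\<forall>x. ((\<lambda>s. f2 s x) has_real_derivative
                (\<Sum>k\<in>UNIV. incidence src tgt x k * v2 t k * g2 t k)) (at t within {0..1}))"
     "f2 0 = \<nu>" "f2 1 = \<rho>"
    using tt2 unfolding transport_triple_def by blast+
  have [measurable]: "(\<lambda>t. v1 t k) \<in> borel_measurable borel" for k using t1(3) by simp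
  have [measurable]: "(\<lambda>t. g1 t k) \<in> borel_measurable borel" for k using t1(4) by simp
  have [measurable]: "(\<lambda>t. v2 t k) \<in> borel_measurable borel" for k using t2(3) by simp
  have [measurable]: "(\<lambda>t. g2 t k) \<in> borel_measurable borel" for k using t2(4) by simp
  have l1: "1 - l > 0" "l \<noteq> 1" "1 - l \<noteq> 0" "l \<noteq> 0" using l by auto
  have s1: "t / l \<in> {0..1}" if "t \<in> {0..1}" "t \<le> l" for t using that l by auto
  have s2: "(t - l) / (1 - l) \<in> {0..1}" if "t \<in> {0..1}" "\<not> t \<le> l" for t using that l by auto
  show ?thesis
    unfolding transport_triple_def
  proof (intro conjI ballI allI)
    fix t :: real assume t: "t \<in> {0..1}"
    show "fc t \<in> prob_vecs" unfolding fc_def using t1(1) t2(1) s1[OF t] s2[OF t] by auto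
    show "gc t \<in> prob_vecs" unfolding gc_def using t1(5) t2(5) s1[OF t] s2[OF t] by auto
  next
    fix x
    have A: "abs_cont_on 0 l (\<lambda>t. fc t x)"
    proof -
      have "abs_cont_on 0 l (\<lambda>t. f1 ((1 / l) * t + 0) x)"
        by (rule ac_affine[OF t1(2)[rule_format, of x]]) (use l in auto)
      then show ?thesis by (rule ac_cong) (auto simp: fc_def)
    qed
    have B: "abs_cont_on l 1 (\<lambda>t. fc t x)"
    proof -
      have "abs_cont_on l 1 (\<lambda>t. f2 ((1 / (1 - l)) * t + (- l / (1 - l))) x)"
        by (rule ac_affine[OF t2(2)[rule_format, of x]]) (use l1 in \<open>auto simp: field_simps\<close>)
      then show ?thesis
      proof (rule ac_cong)
        fix t assume t: "t \<in> {l..1}"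
        have e: "(1 / (1 - l)) * t + (- l / (1 - l)) = (t - l) / (1 - l)" by (simp add: diff_divide_distrib)
        show "f2 ((1 / (1 - l)) * t + (- l / (1 - l))) x = fc t x"
        proof (cases "t \<le> l")
          case True
          then have "t = l" using t by auto
          then show ?thesis unfolding fc_def e using l t1(8) t2(7) by simp
        next
          case False
          then show ?thesis unfolding fc_def e by simp
        qed
      qed
    qed
    show "abs_cont_on 0 1 (\<lambda>t. fc t x)" by (rule ac_join[OF A B]) (use l in auto)
  next
    fix k
    show "(\<lambda>t. vc t k) \<in> borel_measurable lborel" unfolding vc_def by simp
    have e: "(\<lambda>t. gc t k) = (\<lambda>t. if t \<le> l then g1 (t / l) k else g2 ((t - l) / (1 - l)) k)"
      by (auto simp: gc_def)
    show "(\<lambda>t. gc t k) \<in> borel_measurable lborel" unfolding e by simp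
  next
    obtain N1 where N1: "N1 \<in> null_sets lborel" and der1: "\<And>t. t \<in> {0..1} - N1 \<Longrightarrow>
        (\<forall>x. ((\<lambda>s. f1 s x) has_real_derivative
                (\<Sum>k\<in>UNIV. incidence src tgt x k * v1 t k * g1 t k)) (at t within {0..1}))"
      using t1(6) by (rule AE_to_null) (rule that)
    obtain N2 where N2: "N2 \<in> null_sets lborel" and der2: "\<And>t. t \<in> {0..1} - N2 \<Longrightarrow>
        (\<forall>x. ((\<lambda>s. f2 s x) has_real_derivative
                (\<Sum>k\<in>UNIV. incidence src tgt x k * v2 t k * g2 t k)) (at t within {0..1}))"
      using t2(6) by (rule AE_to_null) (rule that)
    define N where "N = {0, l, 1} \<union> (\<lambda>t. 0 + (1 / l) * t) -` N1 \<union> (\<lambda>t. (- l / (1 - l)) + (1 / (1 - l)) * t) -` N2"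
    have F: "{0, l, 1} \<in> null_sets lborel" by (rule finite_imp_null_set_lborel) simp
    have A: "(\<lambda>t. 0 + (1 / l) * t) -` N1 \<in> null_sets lborel"
      by (rule null_affine[OF N1]) (use l in simp)
    have B: "(\<lambda>t. (- l / (1 - l)) + (1 / (1 - l)) * t) -` N2 \<in> null_sets lborel"
      by (rule null_affine[OF N2]) (use l1 in simp)
    have N: "N \<in> null_sets lborel"
      unfolding N_def by (rule null_sets.Un[OF null_sets.Un[OF F A] B])
    show "AE t in lborel. t \<in> {0..1} \<longrightarrow> (\<forall>x. ((\<lambda>s. fc s x) has_real_derivative
                (\<Sum>k\<in>UNIV. incidence src tgt x k * vc t k * gc t k)) (at t within {0..1}))"
    proof (rule null_to_AE[OF N], intro allI)
      fix t x assume t: "t \<in> {0..1} - N"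
      then have tn: "t \<noteq> 0" "t \<noteq> l" "t \<noteq> 1" "t \<in> {0..1}" unfolding N_def by auto
      have "0 \<le> t" "t \<le> 1" using tn(4) by auto
      then consider "0 < t \<and> t < l" | "l < t \<and> t < 1" using tn(1-3) by fastforce
      then show "((\<lambda>s. fc s x) has_real_derivative (\<Sum>k\<in>UNIV. incidence src tgt x k * vc t k * gc t k)) (at t within {0..1})"
      proof cases
        case 1
        define s where "s = t / l"
        have s01: "s \<in> {0<..<1}" using 1 l unfolding s_def by auto
        have sN: "s \<in> {0..1} - N1" using t s01 unfolding N_def s_def by auto
        have dA: "((\<lambda>s. f1 s x) has_real_derivative (\<Sum>k\<in>UNIV. incidence src tgt x k * v1 s k * g1 s k)) (at s)"
          using der1[OF sN] s01 at_within_interior[of s "{0..1}"] by simp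
        have dB: "((\<lambda>t. t / l) has_real_derivative (1 / l)) (at t)"
          using DERIV_cdivide[OF DERIV_ident, of l t] by simp
        have dC: "((\<lambda>t. f1 (t / l) x) has_real_derivative (\<Sum>k\<in>UNIV. incidence src tgt x k * v1 s k * g1 s k) * (1 / l)) (at t)"
          using DERIV_chain2[OF _ dB, of "\<lambda>s. f1 s x"] dA unfolding s_def by simp
        have dD: "((\<lambda>s. fc s x) has_real_derivative (\<Sum>k\<in>UNIV. incidence src tgt x k * v1 s k * g1 s k) * (1 / l)) (at t)"
          by (rule has_field_derivative_transform_within_open[OF dC, of "{0<..<l}"]) (use 1 in \<open>auto simp: fc_def\<close>)
        have val: "(\<Sum>k\<in>UNIV. incidence src tgt x k * v1 s k * g1 s k) * (1 / l) = (\<Sum>k\<in>UNIV. incidence src tgt x k * vc t k * gc t k)"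
          unfolding vc_def gc_def s_def using 1 by (simp add: sum_divide_distrib)
        show ?thesis using has_field_derivative_at_within[OF dD] unfolding val .
      next
        case 2
        define s where "s = (t - l) / (1 - l)"
        have s01: "s \<in> {0<..<1}" using 2 l l1 unfolding s_def by (auto simp: field_simps)
        have sN: "s \<in> {0..1} - N2"
        proof -
          have "s = - l / (1 - l) + 1 / (1 - l) * t" unfolding s_def by (simp add: diff_divide_distrib)
          then show ?thesis using t s01 unfolding N_def by auto
        qed
        have dA: "((\<lambda>s. f2 s x) has_real_derivative (\<Sum>k\<in>UNIV. incidence src tgt x k * v2 s k * g2 s k)) (at s)"
          using der2[OF sN] s01 at_within_interior[of s "{0..1}"] by simp
        have dB: "((\<lambda>t. (t - l) / (1 - l)) has_real_derivative (1 / (1 - l))) (at t)"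
          by (rule derivative_eq_intros refl | use l1 in simp)+
        have dC: "((\<lambda>t. f2 ((t - l) / (1 - l)) x) has_real_derivative (\<Sum>k\<in>UNIV. incidence src tgt x k * v2 s k * g2 s k) * (1 / (1 - l))) (at t)"
          using DERIV_chain2[OF _ dB, of "\<lambda>s. f2 s x"] dA unfolding s_def by simp
        have dD: "((\<lambda>s. fc s x) has_real_derivative (\<Sum>k\<in>UNIV. incidence src tgt x k * v2 s k * g2 s k) * (1 / (1 - l))) (at t)"
          by (rule has_field_derivative_transform_within_open[OF dC, of "{l<..<1}"]) (use 2 in \<open>auto simp: fc_def\<close>)
        have val: "(\<Sum>k\<in>UNIV. incidence src tgt x k * v2 s k * g2 s k) * (1 / (1 - l)) = (\<Sum>k\<in>UNIV. incidence src tgt x k * vc t k * gc t k)"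
          unfolding vc_def gc_def s_def using 2 by (simp add: sum_divide_distrib)
        show ?thesis using has_field_derivative_at_within[OF dD] unfolding val .
      qed
    qed
  next
    show "fc 0 = \<mu>" unfolding fc_def using l t1(7) by simp
    show "fc 1 = \<rho>" unfolding fc_def using l t2(8) by simp
  qed
qed


lemma concat_integral:
  fixes v1 g1 v2 g2 :: "real \<Rightarrow> 'e::finite \<Rightarrow> real"
  assumes vm1: "\<forall>k. (\<lambda>t. v1 t k) \<in> borel_measurable lborel" and gm1: "\<forall>k. (\<lambda>t. g1 t k) \<in> borel_measurable lborel"
    and vm2: "\<forall>k. (\<lambda>t. v2 t k) \<in> borel_measurable lborel" and gm2: "\<forall>k. (\<lambda>t. g2 t k) \<in> borel_measurable lborel"
    and l: "0 < l" "l < 1"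
  defines "vc \<equiv> \<lambda>t k. if t \<le> l then v1 (t / l) k / l else v2 ((t - l) / (1 - l)) k / (1 - l)"
    and "gc \<equiv> \<lambda>t. if t \<le> l then g1 (t / l) else g2 ((t - l) / (1 - l))"
  shows "(\<integral>\<^sup>+ t. ennreal (\<Sum>k\<in>UNIV. gc t k * \<bar>vc t k\<bar> powr q) * indicator {0..1} t \<partial>lborel)
      \<le> ennreal (l powr (1 - q)) * (\<integral>\<^sup>+ t. ennreal (\<Sum>k\<in>UNIV. g1 t k * \<bar>v1 t k\<bar> powr q) * indicator {0..1} t \<partial>lborel)
        + ennreal ((1 - l) powr (1 - q)) * (\<integral>\<^sup>+ t. ennreal (\<Sum>k\<in>UNIV. g2 t k * \<bar>v2 t k\<bar> powr q) * indicator {0..1} t \<partial>lborel)"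
proof -
  have [measurable]: "(\<lambda>t. v1 t k) \<in> borel_measurable borel" for k using vm1 by simp
  have [measurable]: "(\<lambda>t. g1 t k) \<in> borel_measurable borel" for k using gm1 by simp
  have [measurable]: "(\<lambda>t. v2 t k) \<in> borel_measurable borel" for k using vm2 by simp
  have [measurable]: "(\<lambda>t. g2 t k) \<in> borel_measurable borel" for k using gm2 by simp
  have l1: "1 - l > 0" "l \<noteq> 1" "1 - l \<noteq> 0" "l \<noteq> 0" using l by auto
  define \<Phi>1 where "\<Phi>1 t = (\<Sum>k\<in>UNIV. g1 t k * \<bar>v1 t k\<bar> powr q)" for t
  define \<Phi>2 where "\<Phi>2 t = (\<Sum>k\<in>UNIV. g2 t k * \<bar>v2 t k\<bar> powr q)" for t
  define \<Phi>c where "\<Phi>c t = (\<Sum>k\<in>UNIV. gc t k * \<bar>vc t k\<bar> powr q)" for t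
  have [measurable]: "\<Phi>1 \<in> borel_measurable borel" unfolding \<Phi>1_def by measurable
  have [measurable]: "\<Phi>2 \<in> borel_measurable borel" unfolding \<Phi>2_def by measurable
  have gce: "(\<lambda>t. gc t k) = (\<lambda>t. if t \<le> l then g1 (t / l) k else g2 ((t - l) / (1 - l)) k)" for k
    by (auto simp: gc_def)
  have [measurable]: "(\<lambda>t. gc t k) \<in> borel_measurable borel" for k unfolding gce by measurable
  have [measurable]: "(\<lambda>t. vc t k) \<in> borel_measurable borel" for k unfolding vc_def by measurable
  have [measurable]: "\<Phi>c \<in> borel_measurable borel" unfolding \<Phi>c_def by measurable
  have c1: "\<Phi>c t = \<Phi>1 (t / l) / l powr q" if "t \<le> l" for t
  proof -
    have "\<bar>v1 (t / l) k / l\<bar> powr q = \<bar>v1 (t / l) k\<bar> powr q / l powr q" for k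
      using l by (simp add: abs_div powr_divide)
    then show ?thesis unfolding \<Phi>c_def \<Phi>1_def vc_def gc_def using that
      by (simp add: sum_divide_distrib)
  qed
  have c2: "\<Phi>c t = \<Phi>2 ((t - l) / (1 - l)) / (1 - l) powr q" if "\<not> t \<le> l" for t
  proof -
    have "\<bar>v2 ((t - l) / (1 - l)) k / (1 - l)\<bar> powr q = \<bar>v2 ((t - l) / (1 - l)) k\<bar> powr q / (1 - l) powr q" for k
      using l1 by (simp add: abs_div powr_divide)
    then show ?thesis unfolding \<Phi>c_def \<Phi>2_def vc_def gc_def using that
      by (simp add: sum_divide_distrib)
  qed
  have "(\<integral>\<^sup>+ t. ennreal (\<Phi>c t) * indicator {0..1} t \<partial>lborel)
      \<le> (\<integral>\<^sup>+ t. ennreal (\<Phi>c t) * indicator {0..l} t + ennreal (\<Phi>c t) * indicator {l<..1} t \<partial>lborel)"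
    by (intro nn_integral_mono) (use l in \<open>auto split: split_indicator\<close>)
  also have "\<dots> = (\<integral>\<^sup>+ t. ennreal (\<Phi>c t) * indicator {0..l} t \<partial>lborel) + (\<integral>\<^sup>+ t. ennreal (\<Phi>c t) * indicator {l<..1} t \<partial>lborel)"
    by (rule nn_integral_add) auto
  also have "(\<integral>\<^sup>+ t. ennreal (\<Phi>c t) * indicator {0..l} t \<partial>lborel) = ennreal (l powr (1 - q)) * (\<integral>\<^sup>+ t. ennreal (\<Phi>1 t) * indicator {0..1} t \<partial>lborel)"
  proof -
    have "(\<integral>\<^sup>+ t. ennreal (\<Phi>c t) * indicator {0..l} t \<partial>lborel) = ennreal \<bar>l\<bar> * (\<integral>\<^sup>+ s. ennreal (\<Phi>c (0 + l * s)) * indicator {0..l} (0 + l * s) \<partial>lborel)"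
      by (rule nn_integral_real_affine) (use l in auto)
    also have "(\<integral>\<^sup>+ s. ennreal (\<Phi>c (0 + l * s)) * indicator {0..l} (0 + l * s) \<partial>lborel)
        = (\<integral>\<^sup>+ s. ennreal (1 / l powr q) * (ennreal (\<Phi>1 s) * indicator {0..1} s) \<partial>lborel)"
    proof (rule nn_integral_cong)
      fix s :: real
      show "ennreal (\<Phi>c (0 + l * s)) * indicator {0..l} (0 + l * s) = ennreal (1 / l powr q) * (ennreal (\<Phi>1 s) * indicator {0..1} s)"
      proof (cases "s \<in> {0..1}")
        case True
        then have "l * s \<le> l" using l by (simp add: mult_left_le)
        then have "\<Phi>c (0 + l * s) = (1 / l powr q) * \<Phi>1 s" using c1[of "l * s"] l by simp
        moreover have "l * s \<in> {0..l}" using True l \<open>l * s \<le> l\<close> by simp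
        ultimately show ?thesis using True ennreal_mult'[of "1 / l powr q" "\<Phi>1 s"] by simp
      next
        case False
        then have "l * s \<notin> {0..l}" using l by (auto simp: zero_le_mult_iff mult_le_cancel_left1)
        then show ?thesis using False by simp
      qed
    qed
    also have "\<dots> = ennreal (1 / l powr q) * (\<integral>\<^sup>+ s. ennreal (\<Phi>1 s) * indicator {0..1} s \<partial>lborel)"
      by (rule nn_integral_cmult) simp
    finally show ?thesis using l by (simp add: ennreal_mult[symmetric] mult.assoc[symmetric] powr_diff)
  qed
  also have "(\<integral>\<^sup>+ t. ennreal (\<Phi>c t) * indicator {l<..1} t \<partial>lborel) \<le> ennreal ((1 - l) powr (1 - q)) * (\<integral>\<^sup>+ t. ennreal (\<Phi>2 t) * indicator {0..1} t \<partial>lborel)"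
  proof -
    have "(\<integral>\<^sup>+ t. ennreal (\<Phi>c t) * indicator {l<..1} t \<partial>lborel) = ennreal \<bar>1 - l\<bar> * (\<integral>\<^sup>+ s. ennreal (\<Phi>c (l + (1 - l) * s)) * indicator {l<..1} (l + (1 - l) * s) \<partial>lborel)"
      by (rule nn_integral_real_affine) (use l1 in auto)
    also have "(\<integral>\<^sup>+ s. ennreal (\<Phi>c (l + (1 - l) * s)) * indicator {l<..1} (l + (1 - l) * s) \<partial>lborel)
        \<le> (\<integral>\<^sup>+ s. ennreal (1 / (1 - l) powr q) * (ennreal (\<Phi>2 s) * indicator {0..1} s) \<partial>lborel)"
    proof (rule nn_integral_mono)
      fix s :: real
      show "ennreal (\<Phi>c (l + (1 - l) * s)) * indicator {l<..1} (l + (1 - l) * s) \<le> ennreal (1 / (1 - l) powr q) * (ennreal (\<Phi>2 s) * indicator {0..1} s)"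
      proof (cases "l + (1 - l) * s \<in> {l<..1}")
        case True
        then have A: "l < l + (1 - l) * s" "l + (1 - l) * s \<le> 1" by auto
        then have "0 < (1 - l) * s" "(1 - l) * s \<le> (1 - l) * 1" by (simp_all add: algebra_simps)
        then have s: "0 < s" "s \<le> 1" using l1 by (auto simp: zero_less_mult_iff mult_le_cancel_left_pos)
        have "\<not> l + (1 - l) * s \<le> l" using True by simp
        then have "\<Phi>c (l + (1 - l) * s) = (1 / (1 - l) powr q) * \<Phi>2 s" using c2[of "l + (1 - l) * s"] l1 by simp
        then show ?thesis using True s ennreal_mult'[of "1 / (1 - l) powr q" "\<Phi>2 s"] by simp
      next
        case False
        then show ?thesis by simp
      qed
    qed
    also have "(\<integral>\<^sup>+ s. ennreal (1 / (1 - l) powr q) * (ennreal (\<Phi>2 s) * indicator {0..1} s) \<partial>lborel)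
        = ennreal (1 / (1 - l) powr q) * (\<integral>\<^sup>+ s. ennreal (\<Phi>2 s) * indicator {0..1} s \<partial>lborel)"
      by (rule nn_integral_cmult) simp
    finally show ?thesis using l1
      by (simp add: ennreal_mult[symmetric] mult.assoc[symmetric] powr_diff mult_left_mono)
  qed
  finally show ?thesis unfolding \<Phi>c_def \<Phi>1_def \<Phi>2_def by simp
qed


lemma Vq_fin:
  fixes src tgt :: "'e::finite \<Rightarrow> 'v::finite"
  assumes loopless: "\<forall>k. src k \<noteq> tgt k" and conn: "graph_connected src tgt"
    and \<mu>: "\<mu> \<in> prob_vecs" and \<nu>: "\<nu> \<in> prob_vecs"
  shows "Vq src tgt q \<mu> \<nu> < \<infinity>"
proof -
  obtain f v g where "transport_triple src tgt \<mu> \<nu> f v g" "action q v g < \<infinity>"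
    using triple_exists[OF loopless conn \<mu> \<nu>, of q] by blast
  then show ?thesis using Vq_le[of src tgt \<mu> \<nu> f v g q] by (meson le_less_trans)
qed

lemma ennreal_lt_add_eps:
  fixes x :: ennreal
  assumes "x < \<infinity>" "(e::real) > 0"
  shows "x < x + ennreal e"
proof -
  obtain a where a: "x = ennreal a" "0 \<le> a" using assms(1) by (cases x rule: ennreal_cases) auto
  have "ennreal a < ennreal (a + e)" by (rule ennreal_lessI) (use a assms(2) in auto)
  also have "ennreal (a + e) = ennreal a + ennreal e" using a assms(2) by (simp add: ennreal_plus)
  finally show ?thesis using a by simp
qed

lemma action_real:
  assumes "action q v g < \<infinity>" "q \<ge> 1"
  obtains J where "J \<ge> 0"
    "(\<integral>\<^sup>+ t. ennreal (\<Sum>k\<in>UNIV. g t k * \<bar>v t k\<bar> powr q) * indicator {0..1} t \<partial>lborel) = ennreal J"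
    "action q v g = ennreal (J powr (1 / q))"
proof -
  define Jn where "Jn = (\<integral>\<^sup>+ t. ennreal (\<Sum>k\<in>UNIV. g t k * \<bar>v t k\<bar> powr q) * indicator {0..1} t \<partial>lborel)"
  have fin: "Jn \<noteq> \<infinity>" unfolding Jn_def using action_inf[OF assms(1)] .
  have "Jn = ennreal (enn2real Jn)" using fin by (simp add: less_top)
  moreover have "action q v g = ennreal (enn2real Jn powr (1 / q))"
    unfolding Jn_def by (rule action_fin) (use fin in \<open>simp add: Jn_def\<close>)
  ultimately show ?thesis using that[of "enn2real Jn"] unfolding Jn_def by simp
qed

lemma triangle:
  fixes src tgt :: "'e::finite \<Rightarrow> 'v::finite"
  assumes loopless: "\<forall>k. src k \<noteq> tgt k" and conn: "graph_connected src tgt" and q: "q \<ge> 1"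
    and \<mu>: "\<mu> \<in> prob_vecs" and \<nu>: "\<nu> \<in> prob_vecs" and \<rho>: "\<rho> \<in> prob_vecs"
  shows "Vq src tgt q \<mu> \<rho> \<le> Vq src tgt q \<mu> \<nu> + Vq src tgt q \<nu> \<rho>"
proof (rule ennreal_le_epsilon)
  fix e :: real assume e: "e > 0"
  define \<epsilon> where "\<epsilon> = e / 4"
  have \<epsilon>: "\<epsilon> > 0" using e unfolding \<epsilon>_def by simp
  have f1: "Vq src tgt q \<mu> \<nu> < \<infinity>" by (rule Vq_fin[OF loopless conn \<mu> \<nu>])
  have f2: "Vq src tgt q \<nu> \<rho> < \<infinity>" by (rule Vq_fin[OF loopless conn \<nu> \<rho>])
  have "Vq src tgt q \<mu> \<nu> < Vq src tgt q \<mu> \<nu> + ennreal \<epsilon>" by (rule ennreal_lt_add_eps[OF f1 \<epsilon>])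
  then obtain f1 v1 g1 where tt1: "transport_triple src tgt \<mu> \<nu> f1 v1 g1"
      and a1: "action q v1 g1 < Vq src tgt q \<mu> \<nu> + ennreal \<epsilon>"
    unfolding Vq_def[of src tgt q \<mu> \<nu>] INF_less_iff by auto
  have "Vq src tgt q \<nu> \<rho> < Vq src tgt q \<nu> \<rho> + ennreal \<epsilon>" by (rule ennreal_lt_add_eps[OF f2 \<epsilon>])
  then obtain f2 v2 g2 where tt2: "transport_triple src tgt \<nu> \<rho> f2 v2 g2"
      and a2: "action q v2 g2 < Vq src tgt q \<nu> \<rho> + ennreal \<epsilon>"
    unfolding Vq_def[of src tgt q \<nu> \<rho>] INF_less_iff by auto
  have s1: "Vq src tgt q \<mu> \<nu> + ennreal \<epsilon> < \<infinity>" using f1 by simp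
  have s2: "Vq src tgt q \<nu> \<rho> + ennreal \<epsilon> < \<infinity>" using f2 by simp
  have a1f: "action q v1 g1 < \<infinity>" using a1 s1 by (rule order.strict_trans)
  have a2f: "action q v2 g2 < \<infinity>" using a2 s2 by (rule order.strict_trans)
  obtain J1 where J1: "J1 \<ge> 0"
    "(\<integral>\<^sup>+ t. ennreal (\<Sum>k\<in>UNIV. g1 t k * \<bar>v1 t k\<bar> powr q) * indicator {0..1} t \<partial>lborel) = ennreal J1"
    "action q v1 g1 = ennreal (J1 powr (1 / q))"
    using action_real[OF a1f q] by blast
  obtain J2 where J2: "J2 \<ge> 0"
    "(\<integral>\<^sup>+ t. ennreal (\<Sum>k\<in>UNIV. g2 t k * \<bar>v2 t k\<bar> powr q) * indicator {0..1} t \<partial>lborel) = ennreal J2"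
    "action q v2 g2 = ennreal (J2 powr (1 / q))"
    using action_real[OF a2f q] by blast
  define A1 where "A1 = J1 powr (1 / q)"
  define A2 where "A2 = J2 powr (1 / q)"
  define a where "a = A1 + \<epsilon>"
  define b where "b = A2 + \<epsilon>"
  have A: "A1 \<ge> 0" "A2 \<ge> 0" unfolding A1_def A2_def by auto
  have ab: "a > 0" "b > 0" using A \<epsilon> unfolding a_def b_def by auto
  define l where "l = a / (a + b)"
  have l: "0 < l" "l < 1" using ab unfolding l_def by auto
  have J1a: "J1 \<le> a powr q"
  proof -
    have "J1 = A1 powr q" unfolding A1_def using J1(1) q by (simp add: powr_powr)
    also have "\<dots> \<le> a powr q" using A \<epsilon> q unfolding a_def by (intro powr_mono2) auto
    finally show ?thesis .
  qed
  have J2b: "J2 \<le> b powr q"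
  proof -
    have "J2 = A2 powr q" unfolding A2_def using J2(1) q by (simp add: powr_powr)
    also have "\<dots> \<le> b powr q" using A \<epsilon> q unfolding b_def by (intro powr_mono2) auto
    finally show ?thesis .
  qed
  define fc where "fc = (\<lambda>t. if t \<le> l then f1 (t / l) else f2 ((t - l) / (1 - l)))"
  define vc where "vc = (\<lambda>t k. if t \<le> l then v1 (t / l) k / l else v2 ((t - l) / (1 - l)) k / (1 - l))"
  define gc where "gc = (\<lambda>t. if t \<le> l then g1 (t / l) else g2 ((t - l) / (1 - l)))"
  have ttc: "transport_triple src tgt \<mu> \<rho> fc vc gc"
    unfolding fc_def vc_def gc_def by (rule triple_concat[OF tt1 tt2 l])
  have m1: "\<forall>k. (\<lambda>t. v1 t k) \<in> borel_measurable lborel" "\<forall>k. (\<lambda>t. g1 t k) \<in> borel_measurable lborel"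
    using tt1 unfolding transport_triple_def by blast+
  have m2: "\<forall>k. (\<lambda>t. v2 t k) \<in> borel_measurable lborel" "\<forall>k. (\<lambda>t. g2 t k) \<in> borel_measurable lborel"
    using tt2 unfolding transport_triple_def by blast+
  define R where "R = l powr (1 - q) * J1 + (1 - l) powr (1 - q) * J2"
  have R0: "R \<ge> 0" unfolding R_def using J1(1) J2(1) by simp
  have Jc: "(\<integral>\<^sup>+ t. ennreal (\<Sum>k\<in>UNIV. gc t k * \<bar>vc t k\<bar> powr q) * indicator {0..1} t \<partial>lborel) \<le> ennreal R"
  proof -
    have "(\<integral>\<^sup>+ t. ennreal (\<Sum>k\<in>UNIV. gc t k * \<bar>vc t k\<bar> powr q) * indicator {0..1} t \<partial>lborel)
       \<le> ennreal (l powr (1 - q)) * ennreal J1 + ennreal ((1 - l) powr (1 - q)) * ennreal J2"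
      using concat_integral[OF m1 m2 l, of q] J1(2) J2(2) unfolding vc_def gc_def by simp
    also have "\<dots> = ennreal R" unfolding R_def using J1(1) J2(1)
      by (simp add: ennreal_mult[symmetric] ennreal_plus[symmetric] del: ennreal_plus)
    finally show ?thesis .
  qed
  then have Jcf: "(\<integral>\<^sup>+ t. ennreal (\<Sum>k\<in>UNIV. gc t k * \<bar>vc t k\<bar> powr q) * indicator {0..1} t \<partial>lborel) \<noteq> \<infinity>"
    using ennreal_less_top[of R] by (metis infinity_ennreal_def leD)
  define Jc' where "Jc' = enn2real (\<integral>\<^sup>+ t. ennreal (\<Sum>k\<in>UNIV. gc t k * \<bar>vc t k\<bar> powr q) * indicator {0..1} t \<partial>lborel)"
  have Jc'R: "Jc' \<le> R" unfolding Jc'_def using Jc R0 Jcf by (simp add: enn2real_leI)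
  have "Vq src tgt q \<mu> \<rho> \<le> action q vc gc" by (rule Vq_le[OF ttc])
  also have "action q vc gc = ennreal (Jc' powr (1 / q))" unfolding Jc'_def by (rule action_fin[OF Jcf])
  also have "\<dots> \<le> ennreal (R powr (1 / q))"
    using Jc'R q unfolding Jc'_def by (intro ennreal_leI powr_mono2) auto
  also have "\<dots> \<le> ennreal (a + b)"
    using split_bound[OF q J1(1) J2(1) ab J1a J2b l_def] unfolding R_def by (intro ennreal_leI)
  also have "\<dots> = ennreal (J1 powr (1 / q)) + ennreal (J2 powr (1 / q)) + ennreal (2 * \<epsilon>)"
    unfolding a_def b_def A1_def A2_def using \<epsilon>
    by (simp add: ennreal_plus[symmetric] del: ennreal_plus)
  also have "\<dots> = action q v1 g1 + action q v2 g2 + ennreal (2 * \<epsilon>)" using J1(3) J2(3) by simp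
  also have "\<dots> \<le> (Vq src tgt q \<mu> \<nu> + ennreal \<epsilon>) + (Vq src tgt q \<nu> \<rho> + ennreal \<epsilon>) + ennreal (2 * \<epsilon>)"
    using a1 a2 by (intro add_mono) auto
  also have "\<dots> = Vq src tgt q \<mu> \<nu> + Vq src tgt q \<nu> \<rho> + ennreal e"
  proof -
    have "ennreal \<epsilon> + ennreal \<epsilon> + ennreal (2 * \<epsilon>) = ennreal e"
      unfolding \<epsilon>_def using e by (simp add: ennreal_plus[symmetric] del: ennreal_plus)
    then show ?thesis by (metis (no_types, lifting) add.assoc add.commute)
  qed
  finally show "Vq src tgt q \<mu> \<rho> \<le> Vq src tgt q \<mu> \<nu> + Vq src tgt q \<nu> \<rho> + ennreal e" .
qed

theorem mainTheorem10:
  fixes src tgt :: "'e::finite \<Rightarrow> 'v::finite" and q :: real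
  assumes loopless: "\<forall>k. src k \<noteq> tgt k"
    and conn: "graph_connected src tgt"
    and q: "q \<ge> 1"
  shows "(\<forall>\<mu>\<in>prob_vecs. \<forall>\<nu>\<in>prob_vecs. 0 \<le> Vq src tgt q \<mu> \<nu> \<and> Vq src tgt q \<mu> \<nu> < (\<infinity>::ennreal))
       \<and> (\<forall>\<mu>\<in>prob_vecs. \<forall>\<nu>\<in>prob_vecs. Vq src tgt q \<mu> \<nu> = 0 \<longleftrightarrow> \<mu> = \<nu>)
       \<and> (\<forall>\<mu>\<in>prob_vecs. \<forall>\<nu>\<in>prob_vecs. Vq src tgt q \<mu> \<nu> = Vq src tgt q \<nu> \<mu>)
       \<and> (\<forall>\<mu>\<in>prob_vecs. \<forall>\<nu>\<in>prob_vecs. \<forall>\<rho>\<in>prob_vecs.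
            Vq src tgt q \<mu> \<rho> \<le> Vq src tgt q \<mu> \<nu> + Vq src tgt q \<nu> \<rho>)"
proof (intro conjI ballI)
  fix \<mu> \<nu> :: "'v \<Rightarrow> real" assume \<mu>: "\<mu> \<in> prob_vecs" and \<nu>: "\<nu> \<in> prob_vecs"
  show "0 \<le> Vq src tgt q \<mu> \<nu>" by simp
  show "Vq src tgt q \<mu> \<nu> < \<infinity>" by (rule Vq_fin[OF loopless conn \<mu> \<nu>])
  show "Vq src tgt q \<mu> \<nu> = 0 \<longleftrightarrow> \<mu> = \<nu>"
  proof
    assume "Vq src tgt q \<mu> \<nu> = 0" then show "\<mu> = \<nu>" by (rule zero_imp_eq[OF q \<mu> \<nu>])
  next
    assume e: "\<mu> = \<nu>"
    have "Vq src tgt q \<mu> \<mu> \<le> 0"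
      using Vq_le[of src tgt \<mu> \<mu> "\<lambda>t. \<mu>" "\<lambda>t k. 0" "\<lambda>t. unif" q] triple_refl[OF \<mu>, of src tgt q] by simp
    then show "Vq src tgt q \<mu> \<nu> = 0" using e by simp
  qed
  show "Vq src tgt q \<mu> \<nu> = Vq src tgt q \<nu> \<mu>"
    by (rule antisym) (rule Vq_sym_le)+
next
  fix \<mu> \<nu> \<rho> :: "'v \<Rightarrow> real" assume "\<mu> \<in> prob_vecs" "\<nu> \<in> prob_vecs" "\<rho> \<in> prob_vecs"
  then show "Vq src tgt q \<mu> \<rho> \<le> Vq src tgt q \<mu> \<nu> + Vq src tgt q \<nu> \<rho>"
    by (rule triangle[OF loopless conn q])
qed


end
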